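(* Let $K$ be a field of characteristic different from $2$, let $K^{\mathrm{sep}}$ be a separable closure of $K$ with $G_K=\mathrm{Gal}(K^{\mathrm{sep}}/K)$, and let $E/K$ be an elliptic curve. The following statements are equivalent: (1) $E$ is a Legendre elliptic curve over $K$; (2) $E$ can be given (over $K$) by an equation $y^2=(x-a)(x-b)(x-c)$ with $a,b,c\in K$, in which at least one of $\pm(a-b),\pm(b-c),\pm(c-a)$ is a square in $K^*$; (3) all points of order $2$ on $E$ are $K$-rational, and there exists a point $P\in E(K^{\mathrm{sep}})[4]$ such that $-P$ is not in the $G_K$-orbit of $P$.
   Context: An elliptic curve $E/K$ (with $\mathrm{char}\,K\neq 2$) is called a Legendre elliptic curve over $K$ if there exists $\lambda\in K$, $\lambda\neq 0,1$, such that $E$ is isomorphic over $K$ to the curve $E_\lambda: y^2=x(x-1)(x-\lambda)$. *)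

theory Defs
  imports "HOL-Computational_Algebra.Polynomial"
begin

definition subfield :: "'a::field set \<Rightarrow> bool" where
  "subfield K \<longleftrightarrow> 0 \<in> K \<and> 1 \<in> K \<and>
     (\<forall>x\<in>K. \<forall>y\<in>K. x + y \<in> K \<and> x * y \<in> K) \<and>
     (\<forall>x\<in>K. - x \<in> K \<and> inverse x \<in> K)"

definition separable_over :: "'a::field set \<Rightarrow> 'a \<Rightarrow> bool" where
  "separable_over K x \<longleftrightarrow>
     (\<exists>p. p \<noteq> 0 \<and> (\<forall>i. coeff p i \<in> K) \<and> coprime p (pderiv p) \<and> poly p x = 0)"

definition separably_closed :: "'a::field set \<Rightarrow> bool" where
  "separably_closed L \<longleftrightarrow>
     (\<forall>p. (\<forall>i. coeff p i \<in> L) \<and> degree p \<ge> 1 \<and> coprime p (pderiv p)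
          \<longrightarrow> (\<exists>x\<in>L. poly p x = 0))"

definition separable_closure :: "'a::field set \<Rightarrow> 'a set \<Rightarrow> bool" where
  "separable_closure K L \<longleftrightarrow> subfield K \<and> subfield L \<and> K \<subseteq> L \<and>
     (\<forall>x\<in>L. separable_over K x) \<and> separably_closed L"

definition galois_group :: "'a::field set \<Rightarrow> 'a set \<Rightarrow> ('a \<Rightarrow> 'a) set" where
  "galois_group K L = {\<sigma>. bij_betw \<sigma> L L \<and>
     (\<forall>x\<in>L. \<forall>y\<in>L. \<sigma> (x + y) = \<sigma> x + \<sigma> y \<and> \<sigma> (x * y) = \<sigma> x * \<sigma> y) \<and>
     (\<forall>k\<in>K. \<sigma> k = k)}"

text \<open>(a1, a2, a3, a4, a6) for y^2 + a1 x y + a3 y = x^3 + a2 x^2 + a4 x + a6.\<close>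
type_synonym 'a weierstrass = "'a \<times> 'a \<times> 'a \<times> 'a \<times> 'a"

definition discriminant :: "'a::field weierstrass \<Rightarrow> 'a" where
  "discriminant E = (case E of (a1, a2, a3, a4, a6) \<Rightarrow>
     let b2 = a1^2 + 4*a2; b4 = 2*a4 + a1*a3; b6 = a3^2 + 4*a6;
         b8 = a1^2*a6 + 4*a2*a6 - a1*a3*a4 + a2*a3^2 - a4^2
     in - (b2^2*b8) - 8*b4^3 - 27*b6^2 + 9*b2*b4*b6)"

definition elliptic_curve :: "'a::field set \<Rightarrow> 'a weierstrass \<Rightarrow> bool" where
  "elliptic_curve K E \<longleftrightarrow> (case E of (a1, a2, a3, a4, a6) \<Rightarrow>
     a1 \<in> K \<and> a2 \<in> K \<and> a3 \<in> K \<and> a4 \<in> K \<and> a6 \<in> K) \<and> discriminant E \<noteq> 0"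

text \<open>Isomorphism over K (Silverman, Table 3.1): E' is obtained from E by the
  substitution x = u^2 x' + r, y = u^3 y' + s u^2 x' + t with u,r,s,t in K, u nonzero.\<close>
definition iso_over :: "'a::field set \<Rightarrow> 'a weierstrass \<Rightarrow> 'a weierstrass \<Rightarrow> bool" where
  "iso_over K E E' \<longleftrightarrow> (case E of (a1, a2, a3, a4, a6) \<Rightarrow> case E' of (a1', a2', a3', a4', a6') \<Rightarrow>
     (\<exists>u\<in>K. \<exists>r\<in>K. \<exists>s\<in>K. \<exists>t\<in>K. u \<noteq> 0 \<and>
        u * a1' = a1 + 2*s \<and>
        u^2 * a2' = a2 - s*a1 + 3*r - s^2 \<and>
        u^3 * a3' = a3 + r*a1 + 2*t \<and>
        u^4 * a4' = a4 - s*a3 + 2*r*a2 - (t + r*s)*a1 + 3*r^2 - 2*s*t \<and>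
        u^6 * a6' = a6 + r*a4 + r^2*a2 + r^3 - t*a3 - t^2 - r*t*a1))"

text \<open>Legendre curve y^2 = x(x-1)(x-lambda).\<close>
definition legendre_curve :: "'a::field \<Rightarrow> 'a weierstrass" where
  "legendre_curve l = (0, - (1 + l), 0, l, 0)"

definition is_legendre :: "'a::field set \<Rightarrow> 'a weierstrass \<Rightarrow> bool" where
  "is_legendre K E \<longleftrightarrow> (\<exists>l\<in>K. l \<noteq> 0 \<and> l \<noteq> 1 \<and> iso_over K E (legendre_curve l))"

text \<open>Curve y^2 = (x-a)(x-b)(x-c).\<close>
definition cubic_curve :: "'a::field \<Rightarrow> 'a \<Rightarrow> 'a \<Rightarrow> 'a weierstrass" where
  "cubic_curve a b c = (0, - (a + b + c), 0, a*b + b*c + c*a, - (a*b*c))"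

definition nonzero_square :: "'a::field set \<Rightarrow> 'a \<Rightarrow> bool" where
  "nonzero_square K z \<longleftrightarrow> (\<exists>t\<in>K. t \<noteq> 0 \<and> t^2 = z)"

datatype 'a point = Infinity | Affine 'a 'a

definition on_curve :: "'a::field weierstrass \<Rightarrow> 'a set \<Rightarrow> 'a point \<Rightarrow> bool" where
  "on_curve E S P \<longleftrightarrow> (case P of Infinity \<Rightarrow> True
     | Affine x y \<Rightarrow> x \<in> S \<and> y \<in> S \<and> (case E of (a1, a2, a3, a4, a6) \<Rightarrow>
          y^2 + a1*x*y + a3*y = x^3 + a2*x^2 + a4*x + a6))"

definition point_neg :: "'a::field weierstrass \<Rightarrow> 'a point \<Rightarrow> 'a point" where
  "point_neg E P = (case P of Infinity \<Rightarrow> Infinity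
     | Affine x y \<Rightarrow> (case E of (a1, a2, a3, a4, a6) \<Rightarrow> Affine x (- y - a1*x - a3)))"

text \<open>Doubling map [2] of the group law (Silverman III.2.3).\<close>
definition point_double :: "'a::field weierstrass \<Rightarrow> 'a point \<Rightarrow> 'a point" where
  "point_double E P = (case P of Infinity \<Rightarrow> Infinity
     | Affine x y \<Rightarrow> (case E of (a1, a2, a3, a4, a6) \<Rightarrow>
         if 2*y + a1*x + a3 = 0 then Infinity
         else let d = 2*y + a1*x + a3;
                  lam = (3*x^2 + 2*a2*x + a4 - a1*y) / d;
                  nu = (a4*x - x^3 + 2*a6 - a3*y) / d;
                  x3 = lam^2 + a1*lam - a2 - 2*x;
                  y3 = - (lam + a1)*x3 - nu - a3
              in Affine x3 y3))"

definition point_map :: "('a \<Rightarrow> 'a) \<Rightarrow> 'a point \<Rightarrow> 'a point" where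
  "point_map \<sigma> P = (case P of Infinity \<Rightarrow> Infinity | Affine x y \<Rightarrow> Affine (\<sigma> x) (\<sigma> y))"

end

theory Submission
  imports Defs
begin

definition iso_par :: "'a::field weierstrass \<Rightarrow> 'a weierstrass \<Rightarrow> 'a \<Rightarrow> 'a \<Rightarrow> 'a \<Rightarrow> 'a \<Rightarrow> bool" where
  "iso_par E E' u r s t \<longleftrightarrow> (case E of (a1, a2, a3, a4, a6) \<Rightarrow> case E' of (a1', a2', a3', a4', a6') \<Rightarrow>
     u \<noteq> 0 \<and>
        u * a1' = a1 + 2*s \<and>
        u^2 * a2' = a2 - s*a1 + 3*r - s^2 \<and>
        u^3 * a3' = a3 + r*a1 + 2*t \<and>
        u^4 * a4' = a4 - s*a3 + 2*r*a2 - (t + r*s)*a1 + 3*r^2 - 2*s*t \<and>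
        u^6 * a6' = a6 + r*a4 + r^2*a2 + r^3 - t*a3 - t^2 - r*t*a1)"

lemma iso_over_iff: "iso_over K E E' \<longleftrightarrow> (\<exists>u\<in>K. \<exists>r\<in>K. \<exists>s\<in>K. \<exists>t\<in>K. iso_par E E' u r s t)"
  by (cases E; cases E'; simp add: iso_over_def iso_par_def)

lemma curve_identity:
  fixes a1 a2 a3 a4 a6 b1 b2 b3 b4 b6 u r s t x y :: "'a::field"
  assumes "iso_par (a1,a2,a3,a4,a6) (b1,b2,b3,b4,b6) u r s t"
  shows "(u^3*y + s*u^2*x + t)^2 + a1*(u^2*x+r)*(u^3*y + s*u^2*x + t) + a3*(u^3*y + s*u^2*x + t)
     - ((u^2*x+r)^3 + a2*(u^2*x+r)^2 + a4*(u^2*x+r) + a6)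
     = u^6 * (y^2 + b1*x*y + b3*y - (x^3+b2*x^2+b4*x+b6))"
  using assms unfolding iso_par_def by simp algebra

lemma disc_identity:
  fixes a1 a2 a3 a4 a6 b1 b2 b3 b4 b6 u r s t :: "'a::field"
  assumes "iso_par (a1,a2,a3,a4,a6) (b1,b2,b3,b4,b6) u r s t"
  shows "discriminant (a1,a2,a3,a4,a6) = u^12 * discriminant (b1,b2,b3,b4,b6)"
  using assms unfolding iso_par_def discriminant_def Let_def by simp algebra

definition chg :: "'a::field \<Rightarrow> 'a \<Rightarrow> 'a \<Rightarrow> 'a \<Rightarrow> 'a point \<Rightarrow> 'a point" where
  "chg u r s t P = (case P of Infinity \<Rightarrow> Infinity
      | Affine x y \<Rightarrow> Affine (u^2*x + r) (u^3*y + s*u^2*x + t))"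

lemma nu_alt:
  fixes a1 a2 a3 a4 a6 x y :: "'a::field"
  assumes "y^2 + a1*x*y + a3*y = x^3 + a2*x^2 + a4*x + a6" and "2*y + a1*x + a3 \<noteq> 0"
  shows "(a4*x - x^3 + 2*a6 - a3*y) / (2*y + a1*x + a3)
       = y - (3*x^2 + 2*a2*x + a4 - a1*y) / (2*y + a1*x + a3) * x"
  using assms by (simp add: field_simps) algebra

lemma double_affine:
  fixes a1 a2 a3 a4 a6 x y :: "'a::field"
  assumes "y^2 + a1*x*y + a3*y = x^3 + a2*x^2 + a4*x + a6" and "2*y + a1*x + a3 \<noteq> 0"
  defines "lam \<equiv> (3*x^2 + 2*a2*x + a4 - a1*y) / (2*y + a1*x + a3)"
  shows "point_double (a1,a2,a3,a4,a6) (Affine x y) =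
     Affine (lam^2 + a1*lam - a2 - 2*x) (- (lam + a1)*(lam^2 + a1*lam - a2 - 2*x) - (y - lam*x) - a3)"
  using assms(1,2) nu_alt[OF assms(1,2)] unfolding point_double_def Let_def lam_def by simp

lemma double_chg:
  fixes a1 a2 a3 a4 a6 b1 b2 b3 b4 b6 u r s t x y :: "'a::field"
  assumes iso: "iso_par (a1,a2,a3,a4,a6) (b1,b2,b3,b4,b6) u r s t"
    and oc: "y^2 + b1*x*y + b3*y = x^3 + b2*x^2 + b4*x + b6"
  shows "point_double (a1,a2,a3,a4,a6) (chg u r s t (Affine x y))
       = chg u r s t (point_double (b1,b2,b3,b4,b6) (Affine x y))"
proof -
  have u: "u \<noteq> 0" using iso by (simp add: iso_par_def)
  have e: "a1 = u*b1 - 2*s" "a2 = u^2*b2 + s*a1 - 3*r + s^2" "a3 = u^3*b3 - r*a1 - 2*t"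
    using iso by (auto simp: iso_par_def)
  define X where "X = u^2*x + r"
  define Y where "Y = u^3*y + s*u^2*x + t"
  have ocE: "Y^2 + a1*X*Y + a3*Y = X^3 + a2*X^2 + a4*X + a6"
  proof -
    have "Y^2 + a1*X*Y + a3*Y - (X^3 + a2*X^2 + a4*X + a6) = 0"
      using curve_identity[OF iso, of y x] oc unfolding X_def Y_def by simp
    then show ?thesis by simp
  qed
  have dd: "2*Y + a1*X + a3 = u^3 * (2*y + b1*x + b3)"
    unfolding X_def Y_def using iso unfolding iso_par_def by simp algebra
  show ?thesis
  proof (cases "2*y + b1*x + b3 = 0")
    case True
    then show ?thesis using dd unfolding chg_def point_double_def X_def Y_def by simp
  next
    case False
    have dE: "2*Y + a1*X + a3 \<noteq> 0" using dd False u by simp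
    define l' where "l' = (3*x^2 + 2*b2*x + b4 - b1*y) / (2*y + b1*x + b3)"
    define l where "l = (3*X^2 + 2*a2*X + a4 - a1*Y) / (2*Y + a1*X + a3)"
    have ll: "l = u*l' + s"
    proof -
      have "l * (2*Y + a1*X + a3) = (u*l' + s) * (2*Y + a1*X + a3)"
      proof -
        have "l * (2*Y + a1*X + a3) = 3*X^2 + 2*a2*X + a4 - a1*Y" using dE by (simp add: l_def)
        moreover have "l' * (2*y + b1*x + b3) = 3*x^2 + 2*b2*x + b4 - b1*y" using False by (simp add: l'_def)
        ultimately show ?thesis using iso dd unfolding iso_par_def X_def Y_def
          by simp algebra
      qed
      then show ?thesis using dE by simp
    qed
    show ?thesis
      apply (subst chg_def)
      apply (simp only: point.case)
      apply (fold X_def Y_def)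
      apply (subst double_affine[OF ocE dE])
      apply (subst double_affine[OF oc False])
      apply (fold l_def l'_def)
      apply (simp add: chg_def ll)
      using iso unfolding iso_par_def X_def Y_def apply simp
      apply (intro conjI; algebra)
      done
  qed
qed

section \<open>Subfield basics\<close>

lemma sf_0: "subfield K \<Longrightarrow> 0 \<in> K" and sf_1: "subfield K \<Longrightarrow> 1 \<in> K"
  and sf_add: "subfield K \<Longrightarrow> x \<in> K \<Longrightarrow> y \<in> K \<Longrightarrow> x + y \<in> K"
  and sf_mult: "subfield K \<Longrightarrow> x \<in> K \<Longrightarrow> y \<in> K \<Longrightarrow> x * y \<in> K"
  and sf_uminus: "subfield K \<Longrightarrow> x \<in> K \<Longrightarrow> - x \<in> K"
  and sf_inverse: "subfield K \<Longrightarrow> x \<in> K \<Longrightarrow> inverse x \<in> K"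
  by (auto simp: subfield_def)

lemma sf_diff: "subfield K \<Longrightarrow> x \<in> K \<Longrightarrow> y \<in> K \<Longrightarrow> x - y \<in> K"
  using sf_add[of K x "-y"] sf_uminus[of K y] by simp

lemma sf_divide: "subfield K \<Longrightarrow> x \<in> K \<Longrightarrow> y \<in> K \<Longrightarrow> x / y \<in> K"
  using sf_mult[of K x "inverse y"] sf_inverse[of K y] by (simp add: divide_inverse)

lemma sf_power: "subfield K \<Longrightarrow> x \<in> K \<Longrightarrow> x ^ n \<in> K"
  by (induction n) (auto intro: sf_mult sf_1)

lemma sf_of_nat: "subfield K \<Longrightarrow> of_nat n \<in> K"
  by (induction n) (auto intro: sf_add sf_1 sf_0)

lemma sf_numeral: "subfield K \<Longrightarrow> numeral n \<in> K"
  using sf_of_nat[of K "numeral n"] by simp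

lemmas sf_intros = sf_0 sf_1 sf_add sf_mult sf_uminus sf_inverse sf_diff sf_divide sf_power sf_numeral

section \<open>Transfer along isomorphisms\<close>

lemma chg_Inf[simp]: "chg u r s t Infinity = Infinity" by (simp add: chg_def)
lemma chg_Aff: "chg u r s t (Affine x y) = Affine (u^2*x + r) (u^3*y + s*u^2*x + t)" by (simp add: chg_def)
lemma double_Inf[simp]: "point_double E Infinity = Infinity" by (simp add: point_double_def)
lemma neg_Inf[simp]: "point_neg E Infinity = Infinity" by (simp add: point_neg_def)
lemma map_Inf[simp]: "point_map f Infinity = Infinity" by (simp add: point_map_def)

lemma chg_eq_Inf[simp]: "chg u r s t P = Infinity \<longleftrightarrow> P = Infinity"
  by (cases P) (auto simp: chg_def)

lemma chg_inj:
  assumes "u \<noteq> 0" "chg u r s t P = chg u r s t Q" shows "P = Q"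
proof (cases P; cases Q)
  fix x y x' y' assume P: "P = Affine x y" and Q: "Q = Affine x' y'"
  from assms(2) have "u^2*x + r = u^2*x' + r" "u^3*y + s*u^2*x + t = u^3*y' + s*u^2*x' + t"
    by (simp_all add: P Q chg_def)
  then have "x = x'" "y = y'" using assms(1) by auto
  then show ?thesis using P Q by simp
qed (use assms in \<open>auto simp: chg_def\<close>)

lemma on_curve_chg:
  assumes iso: "iso_par E E' u r s t" and S: "subfield S" "u \<in> S" "r \<in> S" "s \<in> S" "t \<in> S"
    and oc: "on_curve E' S P"
  shows "on_curve E S (chg u r s t P)"
proof (cases P)
  case Infinity then show ?thesis by (simp add: on_curve_def)
next
  case (Affine x y)
  obtain a1 a2 a3 a4 a6 where E: "E = (a1,a2,a3,a4,a6)" by (cases E) auto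
  obtain b1 b2 b3 b4 b6 where E': "E' = (b1,b2,b3,b4,b6)" by (cases E') auto
  from oc have xy: "x \<in> S" "y \<in> S" and eq: "y^2 + b1*x*y + b3*y = x^3 + b2*x^2 + b4*x + b6"
    by (auto simp: on_curve_def Affine E')
  have "(u^3*y + s*u^2*x + t)^2 + a1*(u^2*x+r)*(u^3*y + s*u^2*x + t) + a3*(u^3*y + s*u^2*x + t)
     - ((u^2*x+r)^3 + a2*(u^2*x+r)^2 + a4*(u^2*x+r) + a6) = 0"
    using curve_identity[OF iso[unfolded E E'], of y x] eq by simp
  then show ?thesis using xy S
    by (simp add: on_curve_def Affine E chg_def sf_intros)
qed

lemma on_curve_chg_inv:
  assumes iso: "iso_par E E' u r s t" and S: "subfield S" "u \<in> S" "r \<in> S" "s \<in> S" "t \<in> S"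
    and oc: "on_curve E S P"
  shows "\<exists>P'. on_curve E' S P' \<and> P = chg u r s t P'"
proof (cases P)
  case Infinity then show ?thesis by (intro exI[of _ Infinity]) (auto simp: on_curve_def)
next
  case (Affine X Y)
  obtain a1 a2 a3 a4 a6 where E: "E = (a1,a2,a3,a4,a6)" by (cases E) auto
  obtain b1 b2 b3 b4 b6 where E': "E' = (b1,b2,b3,b4,b6)" by (cases E') auto
  have u: "u \<noteq> 0" using iso by (simp add: iso_par_def E E')
  from oc have XY: "X \<in> S" "Y \<in> S" and eq: "Y^2 + a1*X*Y + a3*Y = X^3 + a2*X^2 + a4*X + a6"
    by (auto simp: on_curve_def Affine E)
  define x where "x = (X - r) / u^2"
  define y where "y = (Y - s*(X - r) - t) / u^3"
  have X: "X = u^2*x + r" and Y: "Y = u^3*y + s*u^2*x + t" using u by (simp_all add: x_def y_def)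
  have "u^6 * (y^2 + b1*x*y + b3*y - (x^3 + b2*x^2 + b4*x + b6)) = 0"
    using curve_identity[OF iso[unfolded E E'], of y x] eq X Y by simp
  then have "y^2 + b1*x*y + b3*y = x^3 + b2*x^2 + b4*x + b6" using u by simp
  moreover have "x \<in> S" "y \<in> S" using XY S unfolding x_def y_def by (simp_all add: sf_intros)
  ultimately show ?thesis
    by (intro exI[of _ "Affine x y"]) (simp add: on_curve_def E' Affine chg_def X[symmetric] Y[symmetric])
qed

lemma double_chg_gen:
  assumes iso: "iso_par E E' u r s t" and oc: "on_curve E' S P"
  shows "point_double E (chg u r s t P) = chg u r s t (point_double E' P)"
proof (cases P)
  case Infinity then show ?thesis by simp
next
  case (Affine x y)
  obtain a1 a2 a3 a4 a6 where E: "E = (a1,a2,a3,a4,a6)" by (cases E) auto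
  obtain b1 b2 b3 b4 b6 where E': "E' = (b1,b2,b3,b4,b6)" by (cases E') auto
  show ?thesis using double_chg[OF iso[unfolded E E']] oc by (simp add: on_curve_def Affine E E')
qed

lemma neg_chg:
  assumes iso: "iso_par E E' u r s t"
  shows "point_neg E (chg u r s t P) = chg u r s t (point_neg E' P)"
proof (cases P)
  case Infinity then show ?thesis by simp
next
  case (Affine x y)
  obtain a1 a2 a3 a4 a6 where E: "E = (a1,a2,a3,a4,a6)" by (cases E) auto
  obtain b1 b2 b3 b4 b6 where E': "E' = (b1,b2,b3,b4,b6)" by (cases E') auto
  show ?thesis using iso unfolding iso_par_def E E' Affine point_neg_def chg_def
    by simp algebra
qed

definition hom_on :: "'a::field set \<Rightarrow> ('a \<Rightarrow> 'a) \<Rightarrow> bool" where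
  "hom_on L f \<longleftrightarrow> (\<forall>x\<in>L. \<forall>y\<in>L. f (x + y) = f x + f y \<and> f (x * y) = f x * f y)"

lemma map_chg:
  assumes h: "hom_on L f" and L: "subfield L" and uL: "u \<in> L" "r \<in> L" "s \<in> L" "t \<in> L"
    and fx: "f u = u" "f r = r" "f s = s" "f t = t"
    and oc: "on_curve E' L P"
  shows "point_map f (chg u r s t P) = chg u r s t (point_map f P)"
proof (cases P)
  case Infinity then show ?thesis by simp
next
  case (Affine x y)
  with oc have xy: "x \<in> L" "y \<in> L" by (auto simp: on_curve_def)
  have m: "\<And>a b. a \<in> L \<Longrightarrow> b \<in> L \<Longrightarrow> f (a*b) = f a * f b"
   and a: "\<And>a b. a \<in> L \<Longrightarrow> b \<in> L \<Longrightarrow> f (a+b) = f a + f b" using h by (auto simp: hom_on_def)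
  have "f (u^2*x + r) = u^2 * f x + r"
    using xy uL L fx by (simp add: power2_eq_square m a sf_intros)
  moreover have "f (u^3*y + s*u^2*x + t) = u^3 * f y + s*u^2*f x + t"
    using xy uL L fx by (simp add: power2_eq_square power3_eq_cube m a sf_intros)
  ultimately show ?thesis by (simp add: Affine chg_def point_map_def)
qed

definition subring :: "'a::field set \<Rightarrow> bool" where
  "subring R \<longleftrightarrow> 0 \<in> R \<and> 1 \<in> R \<and> (\<forall>x\<in>R. \<forall>y\<in>R. x + y \<in> R \<and> x * y \<in> R) \<and> (\<forall>x\<in>R. - x \<in> R)"

definition over :: "'a::field set \<Rightarrow> 'a poly \<Rightarrow> bool" where
  "over R p \<longleftrightarrow> (\<forall>i. coeff p i \<in> R)"

lemma subfield_subring: "subfield K \<Longrightarrow> subring K"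
  by (auto simp: subfield_def subring_def)

lemma sr_0: "subring R \<Longrightarrow> 0 \<in> R" and sr_1: "subring R \<Longrightarrow> 1 \<in> R"
  and sr_add: "subring R \<Longrightarrow> x \<in> R \<Longrightarrow> y \<in> R \<Longrightarrow> x + y \<in> R"
  and sr_mult: "subring R \<Longrightarrow> x \<in> R \<Longrightarrow> y \<in> R \<Longrightarrow> x * y \<in> R"
  and sr_uminus: "subring R \<Longrightarrow> x \<in> R \<Longrightarrow> - x \<in> R"
  by (auto simp: subring_def)

lemma sr_diff: "subring R \<Longrightarrow> x \<in> R \<Longrightarrow> y \<in> R \<Longrightarrow> x - y \<in> R"
  using sr_add[of R x "-y"] sr_uminus[of R y] by simp

lemma sr_power: "subring R \<Longrightarrow> x \<in> R \<Longrightarrow> x ^ n \<in> R"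
  by (induction n) (auto intro: sr_mult sr_1)

lemma over_pCons[simp]: "over R (pCons a p) \<longleftrightarrow> a \<in> R \<and> over R p"
  unfolding over_def
  by (metis coeff_pCons_0 coeff_pCons_Suc not0_implies_Suc coeff_pCons)

lemma over_0: "subring R \<Longrightarrow> over R 0"
  by (simp add: over_def sr_0)

lemma over_const: "subring R \<Longrightarrow> over R [:c:] \<longleftrightarrow> c \<in> R"
  by (simp add: over_0)

lemma over_add: "subring R \<Longrightarrow> over R p \<Longrightarrow> over R q \<Longrightarrow> over R (p + q)"
  by (simp add: over_def sr_add)

lemma over_uminus: "subring R \<Longrightarrow> over R p \<Longrightarrow> over R (- p)"
  by (simp add: over_def sr_uminus)

lemma over_diff: "subring R \<Longrightarrow> over R p \<Longrightarrow> over R q \<Longrightarrow> over R (p - q)"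
  by (simp add: over_def sr_diff)

lemma over_smult: "subring R \<Longrightarrow> a \<in> R \<Longrightarrow> over R q \<Longrightarrow> over R (smult a q)"
  by (simp add: over_def sr_mult)

lemma over_mult: "subring R \<Longrightarrow> over R p \<Longrightarrow> over R q \<Longrightarrow> over R (p * q)"
proof (induction p)
  case 0 then show ?case by (simp add: over_0)
next
  case (pCons a p)
  then show ?case by (simp add: over_add over_smult sr_0)
qed

lemma over_monom: "subring R \<Longrightarrow> c \<in> R \<Longrightarrow> over R (monom c n)"
  by (simp add: over_def coeff_monom sr_0)

lemma over_mono: "over R p \<Longrightarrow> R \<subseteq> S \<Longrightarrow> over S p"
  by (auto simp: over_def)

lemma poly_in: "subring R \<Longrightarrow> over R p \<Longrightarrow> z \<in> R \<Longrightarrow> poly p z \<in> R"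
  by (induction p) (auto intro: sr_add sr_mult sr_0)

lemma hom_0: "hom_on R f \<Longrightarrow> 0 \<in> R \<Longrightarrow> f 0 = 0"
proof -
  assume "hom_on R f" "0 \<in> R"
  then have "f (0 + 0) = f 0 + f 0" by (auto simp: hom_on_def)
  then show ?thesis by (metis add_cancel_right_right add_0)
qed

lemma hom_add: "hom_on R f \<Longrightarrow> a \<in> R \<Longrightarrow> b \<in> R \<Longrightarrow> f (a + b) = f a + f b"
  and hom_mult: "hom_on R f \<Longrightarrow> a \<in> R \<Longrightarrow> b \<in> R \<Longrightarrow> f (a * b) = f a * f b"
  by (auto simp: hom_on_def)

lemma hom_uminus: "hom_on R f \<Longrightarrow> subring R \<Longrightarrow> a \<in> R \<Longrightarrow> f (- a) = - f a"
proof -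
  assume h: "hom_on R f" "subring R" "a \<in> R"
  then have "f (a + - a) = f a + f (- a)" using hom_add[of R f a "-a"] sr_uminus[of R a] by blast
  moreover have "f (a + - a) = 0" using hom_0[OF h(1) sr_0[OF h(2)]] by simp
  ultimately have "f a + f (- a) = 0" by simp
  then show ?thesis by (metis add.commute eq_neg_iff_add_eq_0)
qed

lemma hom_diff: "hom_on R f \<Longrightarrow> subring R \<Longrightarrow> a \<in> R \<Longrightarrow> b \<in> R \<Longrightarrow> f (a - b) = f a - f b"
  using hom_add[of R f a "-b"] hom_uminus[of R f b] by (simp add: sr_uminus)

lemma hom_power: "hom_on R f \<Longrightarrow> subring R \<Longrightarrow> f 1 = 1 \<Longrightarrow> a \<in> R \<Longrightarrow> f (a ^ n) = f a ^ n"
  by (induction n) (auto simp: hom_mult sr_power)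

lemma map_poly_add: "hom_on R f \<Longrightarrow> subring R \<Longrightarrow> over R p \<Longrightarrow> over R q \<Longrightarrow>
    map_poly f (p + q) = map_poly f p + map_poly f q"
  by (intro poly_eqI) (simp add: coeff_map_poly hom_0 sr_0 hom_add over_def)

lemma map_poly_uminus: "hom_on R f \<Longrightarrow> subring R \<Longrightarrow> over R p \<Longrightarrow>
    map_poly f (- p) = - map_poly f p"
  by (intro poly_eqI) (simp add: coeff_map_poly hom_0 sr_0 hom_uminus over_def)

lemma map_poly_diff: "hom_on R f \<Longrightarrow> subring R \<Longrightarrow> over R p \<Longrightarrow> over R q \<Longrightarrow>
    map_poly f (p - q) = map_poly f p - map_poly f q"
  by (intro poly_eqI) (simp add: coeff_map_poly hom_0 sr_0 hom_diff over_def)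

lemma map_poly_smult: "hom_on R f \<Longrightarrow> subring R \<Longrightarrow> a \<in> R \<Longrightarrow> over R q \<Longrightarrow>
    map_poly f (smult a q) = smult (f a) (map_poly f q)"
  by (intro poly_eqI) (simp add: coeff_map_poly hom_0 sr_0 hom_mult over_def)

lemma map_poly_mult: "hom_on R f \<Longrightarrow> subring R \<Longrightarrow> over R p \<Longrightarrow> over R q \<Longrightarrow>
    map_poly f (p * q) = map_poly f p * map_poly f q"
proof (induction p)
  case 0 then show ?case by simp
next
  case (pCons a p)
  have f0: "f 0 = 0" using pCons hom_0 sr_0 by blast
  have "map_poly f (pCons a p * q) = map_poly f (smult a q) + map_poly f (pCons 0 (p * q))"
    using pCons by (simp add: map_poly_add over_smult over_mult sr_0)
  also have "\<dots> = smult (f a) (map_poly f q) + pCons 0 (map_poly f p * map_poly f q)"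
    using pCons by (simp add: map_poly_smult map_poly_pCons f0)
  also have "\<dots> = map_poly f (pCons a p) * map_poly f q"
    by (simp add: map_poly_pCons f0)
  finally show ?case .
qed

lemma poly_map_poly_hom: "hom_on R f \<Longrightarrow> subring R \<Longrightarrow> over R p \<Longrightarrow> z \<in> R \<Longrightarrow>
    poly (map_poly f p) (f z) = f (poly p z)"
proof (induction p)
  case 0 then show ?case by (simp add: hom_0 sr_0)
next
  case (pCons a p)
  have f0: "f 0 = 0" using pCons hom_0 sr_0 by blast
  show ?case using pCons
    by (simp add: map_poly_pCons f0 hom_add hom_mult poly_in sr_mult)
qed

lemma over_map_poly: "hom_on R f \<Longrightarrow> subring R \<Longrightarrow> f ` R \<subseteq> L \<Longrightarrow> over R p \<Longrightarrow>
    over L (map_poly f p)"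
  by (auto simp: over_def coeff_map_poly hom_0 sr_0)

lemma map_poly_fix: "over K p \<Longrightarrow> (\<forall>a\<in>K. f a = a) \<Longrightarrow> 0 \<in> K \<Longrightarrow> map_poly f p = p"
  by (intro poly_eqI) (auto simp: over_def coeff_map_poly)

lemma div_over:
  assumes F: "subfield F" and p: "over F p" "p \<noteq> 0"
  shows "over F g \<Longrightarrow> \<exists>q r. over F q \<and> over F r \<and> g = q * p + r \<and> (r = 0 \<or> degree r < degree p)"
proof (induction "degree g" arbitrary: g rule: less_induct)
  case less
  have R: "subring F" using F by (rule subfield_subring)
  show ?case
  proof (cases "g = 0 \<or> degree g < degree p")
    case True
    then show ?thesis using less.prems R by (intro exI[of _ 0] exI[of _ g]) (auto simp: over_0)
  next
    case False
    then have g0: "g \<noteq> 0" and dg: "degree p \<le> degree g" by auto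
    define c where "c = lead_coeff g / lead_coeff p"
    define k where "k = degree g - degree p"
    define g1 where "g1 = g - monom c k * p"
    have c0: "c \<noteq> 0" using g0 p by (simp add: c_def)
    have cF: "c \<in> F" unfolding c_def using less.prems p F by (simp add: over_def sf_divide)
    have dm: "degree (monom c k * p) = degree g"
      using c0 p dg by (simp add: degree_mult_eq degree_monom_eq k_def)
    have lm: "coeff (monom c k * p) (degree g) = lead_coeff g"
    proof -
      have "coeff (monom c k * p) (degree g) = c * lead_coeff p"
        using dg by (simp add: coeff_monom_mult k_def)
      then show ?thesis using p by (simp add: c_def)
    qed
    have og1: "over F g1" unfolding g1_def using less.prems cF p R
      by (intro over_diff over_mult over_monom) auto
    have cg1: "coeff g1 (degree g) = 0" by (simp add: g1_def lm)
    have dg1: "degree g1 \<le> degree g" unfolding g1_def using dm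
      by (metis degree_diff_le le_refl)
    show ?thesis
    proof (cases "g1 = 0")
      case True
      then have "g = monom c k * p + 0" by (simp add: g1_def)
      then show ?thesis using cF R by (intro exI[of _ "monom c k"] exI[of _ 0]) (auto simp: over_monom over_0)
    next
      case False
      have "degree g1 \<noteq> degree g" using False cg1 by (metis leading_coeff_0_iff)
      with dg1 have "degree g1 < degree g" by simp
      from less.hyps[OF this og1] obtain q r where qr: "over F q" "over F r" "g1 = q * p + r"
        "r = 0 \<or> degree r < degree p" by blast
      have "g = (q + monom c k) * p + r" using qr(3) by (simp add: g1_def algebra_simps)
      then show ?thesis using qr cF R by (intro exI[of _ "q + monom c k"] exI[of _ r]) (auto simp: over_add over_monom)
    qed
  qed
qed

definition is_minpoly :: "'a::field set \<Rightarrow> 'a \<Rightarrow> 'a poly \<Rightarrow> bool" where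
  "is_minpoly F z p \<longleftrightarrow> p \<noteq> 0 \<and> over F p \<and> poly p z = 0 \<and>
     (\<forall>q. q \<noteq> 0 \<and> over F q \<and> poly q z = 0 \<longrightarrow> degree p \<le> degree q)"

lemma minpoly_exists:
  assumes "q \<noteq> 0" "over F q" "poly q z = 0" shows "\<exists>p. is_minpoly F z p"
  using ex_has_least_nat[of "\<lambda>q. q \<noteq> 0 \<and> over F q \<and> poly q z = 0" q degree] assms
  unfolding is_minpoly_def by blast

lemma minpoly_dvd:
  assumes F: "subfield F" and m: "is_minpoly F z p" and g: "over F g" "poly g z = 0"
  shows "\<exists>q. over F q \<and> g = q * p"
proof -
  from m have p: "over F p" "p \<noteq> 0" "poly p z = 0" by (auto simp: is_minpoly_def)
  obtain q r where qr: "over F q" "over F r" "g = q * p + r" "r = 0 \<or> degree r < degree p"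
    using div_over[OF F p(1,2) g(1)] by blast
  have "poly r z = 0" using qr(3) g(2) p(3) by simp
  then have "r = 0" using m qr(2,4) unfolding is_minpoly_def by (metis not_le)
  then show ?thesis using qr by auto
qed

lemma minpoly_degree: "is_minpoly F z p \<Longrightarrow> degree p \<ge> 1"
proof (rule ccontr)
  assume m: "is_minpoly F z p" and "\<not> degree p \<ge> 1"
  then have "degree p = 0" by simp
  then have "p = [:coeff p 0:]" by (metis degree_0_id)
  then have "poly p z = coeff p 0" by (metis poly_pCons poly_0 mult_zero_right add_0_right)
  moreover have "p \<noteq> 0" "poly p z = 0" using m by (auto simp: is_minpoly_def)
  ultimately show False using \<open>p = [:coeff p 0:]\<close> by auto
qed

definition adj :: "'a::field set \<Rightarrow> 'a \<Rightarrow> 'a set" where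
  "adj F z = {poly g z | g. over F g}"

lemma adj_subring: "subring F \<Longrightarrow> subring (adj F z)"
  unfolding subring_def adj_def
proof (intro conjI ballI)
  assume F: "0 \<in> F \<and> 1 \<in> F \<and> (\<forall>x\<in>F. \<forall>y\<in>F. x + y \<in> F \<and> x * y \<in> F) \<and> (\<forall>x\<in>F. - x \<in> F)"
  then have R: "subring F" by (simp add: subring_def)
  show "0 \<in> {poly g z |g. over F g}" using R by (intro CollectI exI[of _ 0]) (simp add: over_0)
  show "1 \<in> {poly g z |g. over F g}" using R by (intro CollectI exI[of _ "[:1:]"]) (simp add: over_0 sr_1)
  fix x y assume x: "x \<in> {poly g z |g. over F g}" and y: "y \<in> {poly g z |g. over F g}"
  then obtain g h where "x = poly g z" "over F g" "y = poly h z" "over F h" by auto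
  then have "x + y = poly (g + h) z \<and> over F (g + h)" "x * y = poly (g * h) z \<and> over F (g * h)"
    using R by (auto intro: over_add over_mult)
  then show "x + y \<in> {poly g z |g. over F g}" "x * y \<in> {poly g z |g. over F g}"
    by blast+
next
  fix x assume F: "0 \<in> F \<and> 1 \<in> F \<and> (\<forall>x\<in>F. \<forall>y\<in>F. x + y \<in> F \<and> x * y \<in> F) \<and> (\<forall>x\<in>F. - x \<in> F)"
    and x: "x \<in> {poly g z |g. over F g}"
  then have R: "subring F" by (simp add: subring_def)
  from x obtain g where "x = poly g z" "over F g" by auto
  then show "- x \<in> {poly g z |g. over F g}" using R by (auto intro!: exI[of _ "- g"] over_uminus)
qed

lemma adj_base: "subring F \<Longrightarrow> a \<in> F \<Longrightarrow> a \<in> adj F z"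
  unfolding adj_def by (intro CollectI exI[of _ "[:a:]"]) (simp add: over_0)

lemma adj_gen: "subring F \<Longrightarrow> z \<in> adj F z"
  unfolding adj_def by (intro CollectI exI[of _ "[:0,1:]"]) (simp add: over_0 sr_0 sr_1)

lemma adj_sub: "subring L \<Longrightarrow> F \<subseteq> L \<Longrightarrow> z \<in> L \<Longrightarrow> adj F z \<subseteq> L"
  unfolding adj_def using poly_in over_mono by blast

lemma simple_ext:
  assumes F: "subfield F" and L: "subfield L" and FL: "F \<subseteq> L"
    and h: "hom_on F f" and fL: "f ` F \<subseteq> L" and f1: "f 1 = 1"
    and zL: "z \<in> L" and m: "is_minpoly F z p"
    and z'L: "z' \<in> L" and z': "poly (map_poly f p) z' = 0"
  shows "\<exists>f'. hom_on (adj F z) f' \<and> (\<forall>a\<in>F. f' a = f a) \<and> f' z = z' \<and> f' ` adj F z \<subseteq> L"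
proof -
  have R: "subring F" using F by (rule subfield_subring)
  have RL: "subring L" using L by (rule subfield_subring)
  have p: "over F p" "p \<noteq> 0" "poly p z = 0" using m by (auto simp: is_minpoly_def)
  have wd: "poly (map_poly f g) z' = poly (map_poly f g') z'"
    if g: "over F g" "over F g'" "poly g z = poly g' z" for g g'
  proof -
    have "over F (g - g')" "poly (g - g') z = 0" using g R by (auto simp: over_diff)
    then obtain q where q: "over F q" "g - g' = q * p" using minpoly_dvd[OF F m] by blast
    have "map_poly f g - map_poly f g' = map_poly f q * map_poly f p"
      using map_poly_diff[OF h R g(1,2)] map_poly_mult[OF h R q(1) p(1)] q(2) by simp
    then have "poly (map_poly f g) z' - poly (map_poly f g') z' = 0"
      using z' by (metis poly_diff poly_mult mult_zero_right)
    then show ?thesis by simp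
  qed
  define f' where "f' w = poly (map_poly f (SOME g. over F g \<and> poly g z = w)) z'" for w
  have f'eq: "f' (poly g z) = poly (map_poly f g) z'" if "over F g" for g
  proof -
    have "\<exists>g'. over F g' \<and> poly g' z = poly g z" using that by blast
    then have "over F (SOME g'. over F g' \<and> poly g' z = poly g z) \<and>
               poly (SOME g'. over F g' \<and> poly g' z = poly g z) z = poly g z"
      by (rule someI_ex)
    then show ?thesis unfolding f'_def using wd that by blast
  qed
  have "hom_on (adj F z) f'"
    unfolding hom_on_def
  proof (intro ballI conjI)
    fix x y assume "x \<in> adj F z" "y \<in> adj F z"
    then obtain g g' where g: "over F g" "x = poly g z" "over F g'" "y = poly g' z"
      by (auto simp: adj_def)
    have "f' (x + y) = f' (poly (g + g') z)" using g by simp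
    also have "\<dots> = poly (map_poly f (g + g')) z'" by (rule f'eq, rule over_add[OF R g(1) g(3)])
    also have "\<dots> = f' x + f' y" using g by (simp add: map_poly_add[OF h R] f'eq)
    finally show "f' (x + y) = f' x + f' y" .
    have "f' (x * y) = f' (poly (g * g') z)" using g by simp
    also have "\<dots> = poly (map_poly f (g * g')) z'" by (rule f'eq, rule over_mult[OF R g(1) g(3)])
    also have "\<dots> = f' x * f' y" using g by (simp add: map_poly_mult[OF h R] f'eq)
    finally show "f' (x * y) = f' x * f' y" .
  qed
  moreover have "\<forall>a\<in>F. f' a = f a"
  proof
    fix a assume a: "a \<in> F"
    have "f' a = f' (poly [:a:] z)" by simp
    also have "\<dots> = f a" using a R by (subst f'eq) (simp_all add: over_0 hom_0[OF h sr_0[OF R]] map_poly_pCons)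
    finally show "f' a = f a" .
  qed
  moreover have "f' z = z'"
  proof -
    have "f' z = f' (poly [:0,1:] z)" by simp
    also have "\<dots> = z'" using R f1 by (subst f'eq) (simp_all add: over_0 sr_0 sr_1 hom_0[OF h sr_0[OF R]] map_poly_pCons)
    finally show ?thesis .
  qed
  moreover have "f' ` adj F z \<subseteq> L"
  proof
    fix w assume "w \<in> f' ` adj F z"
    then obtain g where g: "over F g" "w = f' (poly g z)" by (auto simp: adj_def)
    then have "w = poly (map_poly f g) z'" by (simp add: f'eq)
    then show "w \<in> L" using poly_in[OF RL over_map_poly[OF h R fL g(1)] z'L] by simp
  qed
  ultimately show ?thesis by blast
qed

lemma sep_dvd:
  fixes d f :: "'a::field poly"
  assumes "d dvd f" "coprime f (pderiv f)" shows "coprime d (pderiv d)"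
proof (rule coprimeI)
  fix c assume c: "c dvd d" "c dvd pderiv d"
  from assms(1) obtain e where f: "f = d * e" by (auto elim: dvdE)
  have "pderiv f = d * pderiv e + e * pderiv d" by (simp add: f pderiv_mult)
  then have "c dvd pderiv f" using c by simp
  moreover have "c dvd f" using c f by simp
  ultimately show "is_unit c" using assms(2) coprime_common_divisor by blast
qed

lemma strip_X:
  fixes q :: "'a::field poly"
  shows "q \<noteq> 0 \<Longrightarrow> over K q \<Longrightarrow> poly q a = 0 \<Longrightarrow> a \<noteq> 0 \<Longrightarrow>
    \<exists>q'. over K q' \<and> poly q' a = 0 \<and> coeff q' 0 \<noteq> 0"
proof (induction q)
  case 0 then show ?case by simp
next
  case (pCons c p)
  show ?case
  proof (cases "c = 0")
    case False then show ?thesis using pCons.prems by (intro exI[of _ "pCons c p"]) auto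
  next
    case True
    then have "p \<noteq> 0" using pCons.prems by auto
    moreover have "poly p a = 0" using pCons.prems True by simp
    ultimately show ?thesis using pCons by auto
  qed
qed

lemma hom_inj_alg:
  assumes R: "subring R" and h: "hom_on R f" and KR: "K \<subseteq> R" and K0: "0 \<in> K"
    and fK: "\<forall>k\<in>K. f k = k" and a: "a \<in> R" "a \<noteq> 0"
    and q: "q \<noteq> 0" "over K q" "poly q a = 0"
  shows "f a \<noteq> 0"
proof
  assume fa: "f a = 0"
  obtain q' where q': "over K q'" "poly q' a = 0" "coeff q' 0 \<noteq> 0" using strip_X[OF q a(2)] by blast
  have "f (poly q' a) = poly (map_poly f q') (f a)"
    using poly_map_poly_hom[OF h R over_mono[OF q'(1) KR] a(1)] by simp
  also have "\<dots> = poly q' 0" using fa map_poly_fix[OF q'(1) fK K0] by simp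
  also have "\<dots> = coeff q' 0" by (simp add: poly_0_coeff_0)
  finally have "f 0 = coeff q' 0" using q'(2) by simp
  then show False using hom_0[OF h sr_0[OF R]] q'(3) by simp
qed

definition fracs :: "'a::field set \<Rightarrow> 'a set" where
  "fracs R = {a / b | a b. a \<in> R \<and> b \<in> R \<and> b \<noteq> 0}"

lemma frac_ext:
  assumes R: "subring R" and L: "subfield L" and RL: "R \<subseteq> L" and h: "hom_on R f"
    and fL: "f ` R \<subseteq> L" and f1: "f 1 = 1" and inj: "\<forall>a\<in>R. a \<noteq> 0 \<longrightarrow> f a \<noteq> 0"
  shows "subfield (fracs R) \<and> R \<subseteq> fracs R \<and> fracs R \<subseteq> L \<and>
    (\<exists>f'. hom_on (fracs R) f' \<and> (\<forall>a\<in>R. f' a = f a) \<and> f' ` fracs R \<subseteq> L)"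
proof -
  have wd: "f a / f b = f c / f d" if "a \<in> R" "b \<in> R" "c \<in> R" "d \<in> R" "b \<noteq> 0" "d \<noteq> 0" "a / b = c / d"
    for a b c d
  proof -
    have "a * d = c * b" using that by (simp add: field_simps)
    then have "f a * f d = f c * f b" using hom_mult[OF h that(1) that(4)] hom_mult[OF h that(3) that(2)] by simp
    moreover have "f b \<noteq> 0" "f d \<noteq> 0" using inj that by auto
    ultimately show ?thesis by (simp add: field_simps)
  qed
  define f' where "f' w = (let ab = (SOME ab. fst ab \<in> R \<and> snd ab \<in> R \<and> snd ab \<noteq> 0 \<and> w = fst ab / snd ab)
      in f (fst ab) / f (snd ab))" for w
  have f'eq: "f' (a / b) = f a / f b" if "a \<in> R" "b \<in> R" "b \<noteq> 0" for a b
  proof -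
    have ex: "\<exists>ab. fst ab \<in> R \<and> snd ab \<in> R \<and> snd ab \<noteq> 0 \<and> a / b = fst ab / snd ab"
      using that by (intro exI[of _ "(a,b)"]) auto
    define ab where "ab = (SOME ab. fst ab \<in> R \<and> snd ab \<in> R \<and> snd ab \<noteq> 0 \<and> a / b = fst ab / snd ab)"
    have ab: "fst ab \<in> R \<and> snd ab \<in> R \<and> snd ab \<noteq> 0 \<and> a / b = fst ab / snd ab"
      unfolding ab_def by (rule someI_ex[OF ex])
    have "f' (a / b) = f (fst ab) / f (snd ab)" unfolding f'_def Let_def ab_def by simp
    also have "\<dots> = f a / f b" using wd[of "fst ab" "snd ab" a b] ab that by simp
    finally show ?thesis .
  qed
  have fr: "x \<in> fracs R \<longleftrightarrow> (\<exists>a b. a \<in> R \<and> b \<in> R \<and> b \<noteq> 0 \<and> x = a / b)" for x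
    by (auto simp: fracs_def)
  have sub: "R \<subseteq> fracs R"
  proof
    fix a assume "a \<in> R" then show "a \<in> fracs R" unfolding fr using sr_1[OF R]
      by (intro exI[of _ a] exI[of _ 1]) simp
  qed
  have sf: "subfield (fracs R)"
    unfolding subfield_def
  proof (intro conjI ballI)
    show "0 \<in> fracs R" "1 \<in> fracs R" using sub sr_0[OF R] sr_1[OF R] by auto
  next
    fix x y assume "x \<in> fracs R" "y \<in> fracs R"
    then obtain a b c d where x: "a \<in> R" "b \<in> R" "b \<noteq> 0" "x = a / b" and y: "c \<in> R" "d \<in> R" "d \<noteq> 0" "y = c / d"
      unfolding fr by blast
    have "x + y = (a * d + c * b) / (b * d)" using x y by (simp add: field_simps)
    then show "x + y \<in> fracs R" unfolding fr using x y R
      by (intro exI[of _ "a * d + c * b"] exI[of _ "b * d"]) (simp add: sr_add sr_mult)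
    have "x * y = (a * c) / (b * d)" using x y by (simp add: field_simps)
    then show "x * y \<in> fracs R" unfolding fr using x y R
      by (intro exI[of _ "a * c"] exI[of _ "b * d"]) (simp add: sr_mult)
  next
    fix x assume "x \<in> fracs R"
    then obtain a b where x: "a \<in> R" "b \<in> R" "b \<noteq> 0" "x = a / b" unfolding fr by blast
    show "- x \<in> fracs R" unfolding fr using x R
      by (intro exI[of _ "- a"] exI[of _ b]) (simp add: sr_uminus)
    show "inverse x \<in> fracs R"
    proof (cases "a = 0")
      case True then show ?thesis using x sub sr_0[OF R] by auto
    next
      case False then show ?thesis unfolding fr using x
        by (intro exI[of _ b] exI[of _ a]) simp
    qed
  qed
  have sL: "fracs R \<subseteq> L"
  proof
    fix x assume "x \<in> fracs R"
    then obtain a b where x: "a \<in> R" "b \<in> R" "b \<noteq> 0" "x = a / b" unfolding fr by blast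
    then show "x \<in> L" using RL L by (auto intro: sf_divide)
  qed
  have hf': "hom_on (fracs R) f'"
    unfolding hom_on_def
  proof (intro ballI conjI)
    fix x y assume "x \<in> fracs R" "y \<in> fracs R"
    then obtain a b c d where x: "a \<in> R" "b \<in> R" "b \<noteq> 0" "x = a / b" and y: "c \<in> R" "d \<in> R" "d \<noteq> 0" "y = c / d"
      unfolding fr by blast
    have fb: "f b \<noteq> 0" "f d \<noteq> 0" using inj x y by auto
    have "x + y = (a * d + c * b) / (b * d)" using x y by (simp add: field_simps)
    then have "f' (x + y) = f (a * d + c * b) / f (b * d)" using x y R
      by (simp add: f'eq sr_add sr_mult)
    also have "\<dots> = (f a * f d + f c * f b) / (f b * f d)"
      using x y R h by (simp add: hom_add hom_mult sr_mult)
    also have "\<dots> = f a / f b + f c / f d" using fb by (simp add: add_divide_distrib)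
    also have "\<dots> = f' x + f' y" using x y by (simp add: f'eq)
    finally show "f' (x + y) = f' x + f' y" .
    have "x * y = (a * c) / (b * d)" using x y by (simp add: field_simps)
    then have "f' (x * y) = f (a * c) / f (b * d)" using x y R
      by (simp add: f'eq sr_mult)
    also have "\<dots> = f' x * f' y" using x y R fb h
      by (simp add: f'eq hom_mult)
    finally show "f' (x * y) = f' x * f' y" .
  qed
  have ext: "\<forall>a\<in>R. f' a = f a"
  proof
    fix a assume "a \<in> R"
    then have "f' (a / 1) = f a / f 1" using sr_1[OF R] by (intro f'eq) simp_all
    then show "f' a = f a" using f1 by simp
  qed
  have img: "f' ` fracs R \<subseteq> L"
  proof
    fix w assume "w \<in> f' ` fracs R"
    then obtain v where v: "v \<in> fracs R" "w = f' v" by blast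
    then obtain a b where x: "a \<in> R" "b \<in> R" "b \<noteq> 0" "v = a / b" unfolding fr by blast
    then have "w = f a / f b" using v f'eq by simp
    then show "w \<in> L" using x fL L by (auto intro: sf_divide)
  qed
  have "\<exists>f'. hom_on (fracs R) f' \<and> (\<forall>a\<in>R. f' a = f a) \<and> f' ` fracs R \<subseteq> L"
    using hf' ext img by (intro exI[of _ f']) simp
  then show ?thesis using sf sub sL by simp
qed

definition gr :: "'a set \<Rightarrow> ('a \<Rightarrow> 'a) \<Rightarrow> ('a \<times> 'a) set" where
  "gr R f = (\<lambda>a. (a, f a)) ` R"

lemma gr_sub: "gr R f \<subseteq> gr R' f' \<longleftrightarrow> R \<subseteq> R' \<and> (\<forall>a\<in>R. f' a = f a)"
  unfolding gr_def by auto

lemma fst_gr: "fst ` gr R f = R"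
  unfolding gr_def by force

definition goodp :: "'a::field set \<Rightarrow> 'a set \<Rightarrow> 'a \<Rightarrow> 'a set \<Rightarrow> ('a \<Rightarrow> 'a) \<Rightarrow> bool" where
  "goodp M L y R f \<longleftrightarrow> subring R \<and> M \<subseteq> R \<and> R \<subseteq> L \<and> y \<in> R \<and> hom_on R f \<and> f ` R \<subseteq> L \<and>
     (\<forall>a\<in>M. f a = a) \<and> f y = - y"

lemma chain_ub:
  assumes M: "subfield M" and C: "C \<in> chains {gr R f | R f. goodp M L y R f}" and Cne: "C \<noteq> {}"
  shows "\<Union>C \<in> {gr R f | R f. goodp M L y R f}"
proof -
  have mem: "\<forall>X\<in>C. \<exists>R f. X = gr R f \<and> goodp M L y R f" using C by (auto simp: chains_def)
  have ch: "\<forall>X\<in>C. \<forall>Y\<in>C. X \<subseteq> Y \<or> Y \<subseteq> X" using C by (auto simp: chains_def chain_subset_def)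
  define RU where "RU = (\<Union>X\<in>C. fst ` X)"
  have inRU: "a \<in> RU" if "X \<in> C" "X = gr R f" "a \<in> R" for X R f a
  proof -
    have "a \<in> fst ` X" using that by (simp add: fst_gr)
    then show ?thesis unfolding RU_def using that(1) by (rule UN_I[rotated])
  qed
  define fU where "fU a = (SOME b. (a, b) \<in> \<Union>C)" for a
  have key: "fU a = f a" if "X \<in> C" "X = gr R f" "a \<in> R" for X R f a
  proof -
    have in1: "(a, f a) \<in> \<Union>C" using that by (auto simp: gr_def)
    have uniq: "b = f a" if "(a, b) \<in> \<Union>C" for b
    proof -
      from that obtain Y where Y: "Y \<in> C" "(a, b) \<in> Y" by auto
      then obtain R' f' where Y': "Y = gr R' f'" using mem by blast
      then have ab: "a \<in> R'" "b = f' a" using Y(2) by (auto simp: gr_def)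
      from ch \<open>X \<in> C\<close> Y(1) have "X \<subseteq> Y \<or> Y \<subseteq> X" by blast
      then have "f' a = f a" using ab \<open>a \<in> R\<close> \<open>X = gr R f\<close> Y' by (auto simp: gr_sub)
      then show ?thesis using ab by simp
    qed
    have "(a, fU a) \<in> \<Union>C" unfolding fU_def using in1 by (rule someI)
    then show ?thesis using uniq by blast
  qed
  have two: "\<exists>X R f. X \<in> C \<and> X = gr R f \<and> goodp M L y R f \<and> a \<in> R \<and> b \<in> R"
    if ab: "a \<in> RU" "b \<in> RU" for a b
  proof -
    obtain X1 X2 where X: "X1 \<in> C" "a \<in> fst ` X1" "X2 \<in> C" "b \<in> fst ` X2"
      using ab unfolding RU_def by blast
    obtain R1 f1 where G1: "X1 = gr R1 f1" "goodp M L y R1 f1" using mem X(1) by blast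
    obtain R2 f2 where G2: "X2 = gr R2 f2" "goodp M L y R2 f2" using mem X(3) by blast
    note G = G1 G2
    have a1: "a \<in> R1" "b \<in> R2" using X G by (simp_all add: fst_gr)
    from ch X have "X1 \<subseteq> X2 \<or> X2 \<subseteq> X1" by blast
    then show ?thesis
    proof
      assume "X1 \<subseteq> X2" then have "R1 \<subseteq> R2" using G by (simp add: gr_sub)
      then show ?thesis using X G a1 by (intro exI[of _ X2] exI[of _ R2] exI[of _ f2]) auto
    next
      assume "X2 \<subseteq> X1" then have "R2 \<subseteq> R1" using G by (simp add: gr_sub)
      then show ?thesis using X G a1 by (intro exI[of _ X1] exI[of _ R1] exI[of _ f1]) auto
    qed
  qed
  obtain X0 where X0: "X0 \<in> C" using Cne by blast
  then obtain R0 f0 where G0: "X0 = gr R0 f0" "goodp M L y R0 f0" using mem by blast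
  have R0U: "R0 \<subseteq> RU"
  proof -
    have "R0 = fst ` X0" by (simp add: G0 fst_gr)
    moreover have "fst ` X0 \<subseteq> RU" unfolding RU_def using X0 by (rule UN_upper)
    ultimately show ?thesis by simp
  qed
  have eqU: "\<Union>C = gr RU fU"
  proof
    show "\<Union>C \<subseteq> gr RU fU"
    proof
      fix ab assume "ab \<in> \<Union>C"
      then obtain X where X: "X \<in> C" "ab \<in> X" by auto
      then obtain R f where G: "X = gr R f" using mem by blast
      then obtain a where a: "a \<in> R" "ab = (a, f a)" using X by (auto simp: gr_def)
      have "a \<in> RU" using inRU X(1) G a(1) by blast
      moreover have "fU a = f a" using key X G a by blast
      ultimately show "ab \<in> gr RU fU" using a by (auto simp: gr_def)
    qed
  next
    show "gr RU fU \<subseteq> \<Union>C"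
    proof
      fix ab assume "ab \<in> gr RU fU"
      then obtain a where a: "a \<in> RU" "ab = (a, fU a)" by (auto simp: gr_def)
      then obtain X R f where G: "X \<in> C" "X = gr R f" "a \<in> R" using two by blast
      then have "fU a = f a" using key by blast
      then show "ab \<in> \<Union>C" using G a by (auto simp: gr_def)
    qed
  qed
  have g0: "subring R0" "M \<subseteq> R0" "y \<in> R0" using G0 by (auto simp: goodp_def)
  have "goodp M L y RU fU"
    unfolding goodp_def
  proof (intro conjI)
    show "subring RU" unfolding subring_def
    proof (intro conjI ballI)
      show "0 \<in> RU" "1 \<in> RU" using R0U g0 sr_0 sr_1 by blast+
    next
      fix a b assume "a \<in> RU" "b \<in> RU"
      then obtain X R f where G: "X \<in> C" "X = gr R f" "goodp M L y R f" "a \<in> R" "b \<in> R" using two by blast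
      have "a + b \<in> R" "a * b \<in> R" using G by (auto simp: goodp_def sr_add sr_mult)
      then show "a + b \<in> RU" "a * b \<in> RU" using inRU G(1,2) by blast+
    next
      fix a assume "a \<in> RU"
      then obtain X R f where G: "X \<in> C" "X = gr R f" "goodp M L y R f" "a \<in> R" using two by blast
      have "- a \<in> R" using G by (auto simp: goodp_def sr_uminus)
      then show "- a \<in> RU" using inRU G(1,2) by blast
    qed
    show "M \<subseteq> RU" using R0U g0 by blast
    show "y \<in> RU" using R0U g0 by blast
    show "RU \<subseteq> L"
    proof
      fix a assume "a \<in> RU"
      then obtain X R f where G: "X \<in> C" "X = gr R f" "goodp M L y R f" "a \<in> R" using two by blast
      then show "a \<in> L" by (auto simp: goodp_def)
    qed
    show "hom_on RU fU" unfolding hom_on_def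
    proof (intro ballI conjI)
      fix a b assume "a \<in> RU" "b \<in> RU"
      then obtain X R f where G: "X \<in> C" "X = gr R f" "goodp M L y R f" "a \<in> R" "b \<in> R" using two by blast
      have s: "a + b \<in> R" "a * b \<in> R" using G by (auto simp: goodp_def sr_add sr_mult)
      have h: "hom_on R f" using G by (auto simp: goodp_def)
      show "fU (a + b) = fU a + fU b" using key[OF G(1,2)] s G(4,5) hom_add[OF h G(4,5)] by simp
      show "fU (a * b) = fU a * fU b" using key[OF G(1,2)] s G(4,5) hom_mult[OF h G(4,5)] by simp
    qed
    show "fU ` RU \<subseteq> L"
    proof
      fix w assume "w \<in> fU ` RU"
      then obtain a where a: "a \<in> RU" "w = fU a" by blast
      then obtain X R f where G: "X \<in> C" "X = gr R f" "goodp M L y R f" "a \<in> R" using two by blast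
      then have "fU a = f a" using key by blast
      then show "w \<in> L" using G a by (auto simp: goodp_def)
    qed
    show "\<forall>a\<in>M. fU a = a"
    proof
      fix a assume "a \<in> M"
      then have "fU a = f0 a" using key[OF X0 G0(1)] g0 by blast
      then show "fU a = a" using G0 \<open>a \<in> M\<close> by (auto simp: goodp_def)
    qed
    show "fU y = - y" using key[OF X0 G0(1)] g0 G0 by (auto simp: goodp_def)
  qed
  then show ?thesis using eqU by blast
qed

lemma galois_ext:
  assumes sc: "separable_closure K L" and M: "subfield M" and KM: "K \<subseteq> M" and MsL: "M \<subseteq> L"
    and yL: "y \<in> L" and yM: "y \<notin> M" and y2: "y^2 \<in> M"
  shows "\<exists>\<sigma>\<in>galois_group K L. (\<forall>a\<in>M. \<sigma> a = a) \<and> \<sigma> y = - y"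
proof -
  have K: "subfield K" and L: "subfield L" and KL: "K \<subseteq> L" and scl: "separably_closed L"
    and sep: "\<forall>x\<in>L. separable_over K x"
    using sc by (auto simp: separable_closure_def)
  have alg: "\<exists>q. q \<noteq> 0 \<and> over K q \<and> coprime q (pderiv q) \<and> poly q x = 0" if "x \<in> L" for x
    using sep that by (auto simp: separable_over_def over_def)
  have MR: "subring M" and LR: "subring L" using M L by (auto intro: subfield_subring)
  define A where "A = {gr R f | R f. goodp M L y R f}"
  have base: "\<exists>R f. goodp M L y R f"
  proof -
    define q0 where "q0 = [:- (y^2), 0, 1:]"
    have oq0: "over M q0" unfolding q0_def using M y2 by (simp add: sf_intros over_0 subfield_subring)
    have q00: "q0 \<noteq> 0" by (simp add: q0_def)
    have pq0: "poly q0 y = 0" by (simp add: q0_def power2_eq_square)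
    obtain p where m: "is_minpoly M y p" using minpoly_exists[OF q00 oq0 pq0] by blast
    have p: "p \<noteq> 0" "over M p" "poly p y = 0" using m by (auto simp: is_minpoly_def)
    have d2: "degree p \<le> 2" using m q00 oq0 pq0 unfolding is_minpoly_def by (metis degree_pCons_eq_if q0_def
          one_neq_zero pCons_eq_0_iff degree_pCons_0 numeral_2_eq_2 One_nat_def)
    have d1: "degree p \<noteq> 1"
    proof
      assume d: "degree p = 1"
      have "poly p y = coeff p 0 + coeff p 1 * y" using d by (simp add: poly_altdef)
      moreover have c1: "coeff p 1 \<noteq> 0" using d p(1) by (metis leading_coeff_0_iff)
      ultimately have "y = - coeff p 0 / coeff p 1" using p(3) by (simp add: field_simps add_eq_0_iff)
      moreover have "- coeff p 0 / coeff p 1 \<in> M" using p(2) M by (simp add: over_def sf_intros)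
      ultimately show False using yM by simp
    qed
    have dp: "degree p = 2" using d1 d2 minpoly_degree[OF m] by linarith
    obtain g where g: "over M g" "q0 = g * p" using minpoly_dvd[OF M m oq0 pq0] by blast
    have g0: "g \<noteq> 0" using g q00 by auto
    have "degree q0 = degree g + degree p" using g g0 p(1) by (simp add: degree_mult_eq)
    moreover have "degree q0 = 2" by (simp add: q0_def)
    ultimately have "degree g = 0" using dp by simp
    then have gc: "g = [:coeff g 0:]" by (metis degree_0_id)
    have "coeff g 0 \<noteq> 0" using g0 gc by (metis pCons_eq_0_iff)
    moreover have "poly q0 (- y) = 0" by (simp add: q0_def power2_eq_square)
    then have "coeff g 0 * poly p (- y) = 0" using g(2) gc by (metis poly_mult poly_pCons poly_0 mult_zero_right add_0_right)
    ultimately have root: "poly p (- y) = 0" by simp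
    have hid: "hom_on M (\<lambda>x. x)" by (simp add: hom_on_def)
    obtain f1 where f1: "hom_on (adj M y) f1" "\<forall>a\<in>M. f1 a = a" "f1 y = - y" "f1 ` adj M y \<subseteq> L"
    proof -
      have my: "- y \<in> L" using L yL by (rule sf_uminus)
      have "(\<lambda>x. x) ` M \<subseteq> L" using MsL by simp
      moreover have "poly (map_poly (\<lambda>x. x) p) (- y) = 0" using root by simp
      ultimately show ?thesis using simple_ext[OF M L MsL hid _ _ yL m my] that by auto
    qed
    have "goodp M L y (adj M y) f1"
      unfolding goodp_def using f1 adj_subring[OF MR] adj_base[OF MR] adj_gen[OF MR] adj_sub[OF LR MsL yL]
      by blast
    then show ?thesis by blast
  qed
  have ub: "\<forall>C\<in>chains A. \<exists>U\<in>A. \<forall>X\<in>C. X \<subseteq> U"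
  proof
    fix C assume C: "C \<in> chains A"
    show "\<exists>U\<in>A. \<forall>X\<in>C. X \<subseteq> U"
    proof (cases "C = {}")
      case True
      obtain R f where "goodp M L y R f" using base by blast
      then have "gr R f \<in> A" by (auto simp: A_def)
      then show ?thesis using True by blast
    next
      case False
      have "\<Union>C \<in> A" using chain_ub[OF M C[unfolded A_def] False] by (simp add: A_def)
      then show ?thesis by blast
    qed
  qed
  obtain G where G: "G \<in> A" and Gmax: "\<forall>X\<in>A. G \<subseteq> X \<longrightarrow> X = G"
    using Zorn_Lemma2[OF ub] by blast
  obtain R f where GR: "G = gr R f" and good: "goodp M L y R f" using G by (auto simp: A_def)
  have max': "R' \<subseteq> R" if "goodp M L y R' f'" "R \<subseteq> R'" "\<forall>a\<in>R. f' a = f a" for R' f'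
  proof -
    have "gr R' f' \<in> A" using that(1) by (auto simp: A_def)
    moreover have "G \<subseteq> gr R' f'" using that(2,3) GR by (simp add: gr_sub)
    ultimately have "gr R' f' = gr R f" using Gmax GR by blast
    then have "fst ` gr R' f' = fst ` gr R f" by simp
    then show ?thesis by (simp add: fst_gr)
  qed
  have R: "subring R" "M \<subseteq> R" "R \<subseteq> L" "y \<in> R" and h: "hom_on R f" and fL: "f ` R \<subseteq> L"
    and fM: "\<forall>a\<in>M. f a = a" and fy: "f y = - y"
    using good by (auto simp: goodp_def)
  have KR: "K \<subseteq> R" using KM R by blast
  have fK: "\<forall>k\<in>K. f k = k" using fM KM by blast
  have f1: "f 1 = 1" using fM sf_1[OF M] by blast
  have K0: "0 \<in> K" using K by (rule sf_0)
  have inj: "\<forall>a\<in>R. a \<noteq> 0 \<longrightarrow> f a \<noteq> 0"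
  proof (intro ballI impI)
    fix a assume a: "a \<in> R" "a \<noteq> 0"
    obtain q where q: "q \<noteq> 0" "over K q" "poly q a = 0" using alg[of a] a R by blast
    show "f a \<noteq> 0" using hom_inj_alg[OF R(1) h KR K0 fK a q] .
  qed
  have RF: "subfield R"
  proof -
    obtain f' where fr: "subfield (fracs R)" "R \<subseteq> fracs R" "fracs R \<subseteq> L"
        "hom_on (fracs R) f'" "\<forall>a\<in>R. f' a = f a" "f' ` fracs R \<subseteq> L"
      using frac_ext[OF R(1) L R(3) h fL f1 inj] by blast
    have "goodp M L y (fracs R) f'"
      unfolding goodp_def using fr subfield_subring[OF fr(1)] R fM fy by auto
    then have "fracs R \<subseteq> R" using max' fr by blast
    then have "fracs R = R" using fr by blast
    then show ?thesis using fr(1) by simp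
  qed
  have RL: "R = L"
  proof (rule ccontr)
    assume "R \<noteq> L"
    then obtain z where z: "z \<in> L" "z \<notin> R" using R by blast
    obtain q where q: "q \<noteq> 0" "over K q" "coprime q (pderiv q)" "poly q z = 0" using alg z by blast
    have qR: "over R q" using over_mono[OF q(2) KR] .
    obtain p where m: "is_minpoly R z p" using minpoly_exists[OF q(1) qR q(4)] by blast
    have p: "p \<noteq> 0" "over R p" "poly p z = 0" using m by (auto simp: is_minpoly_def)
    obtain g where g: "over R g" "q = g * p" using minpoly_dvd[OF RF m qR q(4)] by blast
    have "map_poly f q = q" using map_poly_fix[OF q(2) fK K0] .
    moreover have "map_poly f q = map_poly f g * map_poly f p" using map_poly_mult[OF h R(1) g(1) p(2)] g(2) by simp
    ultimately have "map_poly f p dvd q" by (metis dvd_triv_right)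
    then have cop: "coprime (map_poly f p) (pderiv (map_poly f p))" using sep_dvd q(3) by blast
    have lc: "coeff (map_poly f p) (degree p) \<noteq> 0"
    proof -
      have "coeff (map_poly f p) (degree p) = f (lead_coeff p)" by (simp add: coeff_map_poly hom_0[OF h sr_0[OF R(1)]])
      moreover have "lead_coeff p \<in> R" using p(2) by (simp add: over_def)
      ultimately show ?thesis using inj p(1) by simp
    qed
    have deg: "degree (map_poly f p) \<ge> 1" using le_degree[OF lc] minpoly_degree[OF m] by linarith
    have oL: "\<forall>i. coeff (map_poly f p) i \<in> L" using over_map_poly[OF h R(1) fL p(2)] by (simp add: over_def)
    obtain z' where z': "z' \<in> L" "poly (map_poly f p) z' = 0"
      using scl oL deg cop unfolding separably_closed_def by blast
    obtain f' where f': "hom_on (adj R z) f'" "\<forall>a\<in>R. f' a = f a" "f' z = z'" "f' ` adj R z \<subseteq> L"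
      using simple_ext[OF RF L R(3) h fL f1 z(1) m z'] by blast
    have "goodp M L y (adj R z) f'"
      unfolding goodp_def using f' adj_subring[OF R(1)] adj_base[OF R(1)] adj_sub[OF LR R(3) z(1)] R fM fy
      by auto
    moreover have "R \<subseteq> adj R z" using adj_base[OF R(1)] by blast
    ultimately have "adj R z \<subseteq> R" using max' f'(2) by blast
    then show False using adj_gen[OF R(1)] z(2) by blast
  qed
  have hL: "hom_on L f" using h RL by simp
  have injL: "inj_on f L"
  proof (rule inj_onI)
    fix a b assume ab: "a \<in> L" "b \<in> L" "f a = f b"
    then have "f (a - b) = 0" using hom_diff[OF h R(1)] RL by simp
    moreover have "a - b \<in> R" using ab RL R(1) by (simp add: sr_diff)
    ultimately have "a - b = 0" using inj by blast
    then show "a = b" by simp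
  qed
  have surj: "L \<subseteq> f ` L"
  proof
    fix w assume w: "w \<in> L"
    obtain q where q: "q \<noteq> 0" "over K q" "poly q w = 0" using alg w by blast
    define Z where "Z = {v \<in> L. poly q v = 0}"
    have fin: "finite Z" unfolding Z_def using poly_roots_finite[OF q(1)] by (rule rev_finite_subset) auto
    have "f ` Z \<subseteq> Z"
    proof
      fix u assume "u \<in> f ` Z"
      then obtain v where v: "v \<in> L" "poly q v = 0" "u = f v" by (auto simp: Z_def)
      have "poly (map_poly f q) (f v) = f (poly q v)"
        using poly_map_poly_hom[OF h R(1) over_mono[OF q(2) KR]] v RL by simp
      then have "poly q u = f 0" using v map_poly_fix[OF q(2) fK K0] by simp
      then have "poly q u = 0" using hom_0[OF h sr_0[OF R(1)]] by simp
      moreover have "u \<in> L" using v fL RL by blast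
      ultimately show "u \<in> Z" by (simp add: Z_def)
    qed
    moreover have "inj_on f Z" using injL by (rule inj_on_subset) (auto simp: Z_def)
    ultimately have "f ` Z = Z" using fin endo_inj_surj by blast
    moreover have "w \<in> Z" using w q by (simp add: Z_def)
    ultimately show "w \<in> f ` L" unfolding Z_def by blast
  qed
  have "bij_betw f L L" unfolding bij_betw_def using injL surj fL RL by blast
  then have "f \<in> galois_group K L" using hL fK unfolding galois_group_def hom_on_def by blast
  then show ?thesis using fM fy by blast
qed

lemma on_curve_double_eq:
  fixes a1 a2 a3 a4 a6 x y lam :: "'a::field"
  assumes c: "y^2 + a1*x*y + a3*y = x^3 + a2*x^2 + a4*x + a6"
    and l: "lam * (2*y + a1*x + a3) = 3*x^2 + 2*a2*x + a4 - a1*y"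
  defines "x3 \<equiv> lam^2 + a1*lam - a2 - 2*x"
  defines "y3 \<equiv> - (lam + a1)*x3 - (y - lam*x) - a3"
  shows "y3^2 + a1*x3*y3 + a3*y3 = x3^3 + a2*x3^2 + a4*x3 + a6"
  using c l unfolding x3_def y3_def by algebra

lemma disc_cubic: "discriminant (cubic_curve a b c) = 16 * ((a - b) * (b - c) * (c - a))^2"
  unfolding discriminant_def cubic_curve_def Let_def by simp algebra

lemma x3_identity:
  fixes a b c x y lam :: "'a::field"
  assumes c: "y^2 = (x - a)*(x - b)*(x - c)"
    and l: "lam * (2*y) = 3*x^2 - 2*(a+b+c)*x + (a*b+b*c+c*a)"
  shows "4*y^2*((lam^2 + (a+b+c) - 2*x) - a) = ((x-a)^2 - (a-b)*(a-c))^2"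
  using c l by algebra

lemma disc_double_root:
  fixes b2 b4 b6 r :: "'a::field"
  assumes "r^3 + b2*r^2 + b4*r + b6 = 0" "3*r^2 + 2*b2*r + b4 = 0"
  shows "discriminant (0, b2, 0, b4, b6) = 0"
  using assms unfolding discriminant_def Let_def by simp algebra

lemma cubic_eq_iff:
  fixes a b c x y :: "'a::field"
  shows "(case cubic_curve a b c of (a1, a2, a3, a4, a6) \<Rightarrow>
          y^2 + a1*x*y + a3*y = x^3 + a2*x^2 + a4*x + a6) \<longleftrightarrow> y^2 = (x-a)*(x-b)*(x-c)"
proof -
  have "(x-a)*(x-b)*(x-c) = x^3 + (- (a+b+c))*x^2 + (a*b+b*c+c*a)*x + (- (a*b*c))"
    by (simp add: algebra_simps power2_eq_square power3_eq_cube)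
  then show ?thesis by (simp add: cubic_curve_def)
qed

lemma on_curve_cubic:
  "on_curve (cubic_curve a b c) S (Affine x y) \<longleftrightarrow> x \<in> S \<and> y \<in> S \<and> y^2 = (x-a)*(x-b)*(x-c)"
proof -
  have "(x-a)*(x-b)*(x-c) = x^3 + (- (a+b+c))*x^2 + (a*b+b*c+c*a)*x + (- (a*b*c))"
    by (simp add: algebra_simps power2_eq_square power3_eq_cube)
  then show ?thesis by (simp add: cubic_curve_def on_curve_def)
qed

lemma neg_cubic: "point_neg (cubic_curve a b c) (Affine x y) = Affine x (- y)"
  by (simp add: point_neg_def cubic_curve_def)

lemma double_cubic_0: "point_double (cubic_curve a b c) (Affine x 0) = Infinity"
  by (simp add: point_double_def cubic_curve_def)

lemma double_cubic:
  fixes a b c x y :: "'a::field"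
  assumes "y^2 = (x-a)*(x-b)*(x-c)" "(2::'a) * y \<noteq> 0"
  defines "lam \<equiv> (3*x^2 - 2*(a+b+c)*x + (a*b+b*c+c*a)) / (2*y)"
  shows "point_double (cubic_curve a b c) (Affine x y) =
     Affine (lam^2 + (a+b+c) - 2*x) (- lam*(lam^2 + (a+b+c) - 2*x) - (y - lam*x))"
proof -
  have oc: "y^2 + 0*x*y + 0*y = x^3 + (- (a+b+c))*x^2 + (a*b+b*c+c*a)*x + (- (a*b*c))"
    using assms(1) by (simp add: algebra_simps power2_eq_square power3_eq_cube)
  have d: "2*y + 0*x + 0 \<noteq> 0" using assms(2) by simp
  have l: "lam = (3*x^2 + 2*(- (a+b+c))*x + (a*b+b*c+c*a) - 0*y) / (2*y + 0*x + 0)"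
    unfolding lam_def by (simp add: algebra_simps)
  show ?thesis
    using double_affine[OF oc d] unfolding cubic_curve_def l[symmetric]
    by (simp add: algebra_simps)
qed

lemma on_curve_double:
  assumes S: "subfield S" and oc: "on_curve (a1,a2,a3,a4,a6) S P"
    and co: "a1 \<in> S" "a2 \<in> S" "a3 \<in> S" "a4 \<in> S" "a6 \<in> S"
  shows "on_curve (a1,a2,a3,a4,a6) S (point_double (a1,a2,a3,a4,a6) P)"
proof (cases P)
  case Infinity then show ?thesis by (simp add: on_curve_def)
next
  case (Affine x y)
  from oc have xy: "x \<in> S" "y \<in> S" and c: "y^2 + a1*x*y + a3*y = x^3 + a2*x^2 + a4*x + a6"
    by (auto simp: on_curve_def Affine)
  show ?thesis
  proof (cases "2*y + a1*x + a3 = 0")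
    case True then show ?thesis by (simp add: Affine point_double_def on_curve_def)
  next
    case False
    define lam where "lam = (3*x^2 + 2*a2*x + a4 - a1*y) / (2*y + a1*x + a3)"
    have l: "lam * (2*y + a1*x + a3) = 3*x^2 + 2*a2*x + a4 - a1*y" using False by (simp add: lam_def)
    have eq: "point_double (a1,a2,a3,a4,a6) P = Affine (lam^2 + a1*lam - a2 - 2*x) (- (lam + a1)*(lam^2 + a1*lam - a2 - 2*x) - (y - lam*x) - a3)"
      using double_affine[OF c False] by (simp add: Affine lam_def)
    have "lam \<in> S" unfolding lam_def using co xy S by (simp add: sf_intros)
    then show ?thesis using eq on_curve_double_eq[OF c l] co xy S
      by (simp add: on_curve_def sf_intros)
  qed
qed

lemma coprime_bezout:
  fixes p q :: "'a::field poly"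
  assumes "a * p + b * q = 1" shows "coprime p q"
proof (rule coprimeI)
  fix c assume "c dvd p" "c dvd q"
  then have "c dvd a * p + b * q" by (simp add: dvd_add dvd_mult)
  then show "is_unit c" using assms by simp
qed

lemma sqrt_exists:
  fixes D :: "'a::field"
  assumes sc: "separable_closure K L" and char: "(2::'a) \<noteq> 0" and D: "D \<in> L" "D \<noteq> 0"
  shows "\<exists>v\<in>L. v^2 = D"
proof -
  have scl: "separably_closed L" and L: "subfield L" using sc by (auto simp: separable_closure_def)
  define q where "q = [:- D, 0, 1:]"
  have pd: "pderiv q = [:0, 2:]" by (simp add: q_def pderiv_pCons)
  have "[:- 1 / D:] * [:- D, 0, 1:] + [:0, 1 / (2 * D):] * [:0, 2:] = 1"
    using D char by (simp add: field_simps one_pCons)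
  then have "[:- 1 / D:] * q + [:0, 1 / (2 * D):] * pderiv q = 1"
    using pd by (simp only: q_def)
  then have cop: "coprime q (pderiv q)" by (rule coprime_bezout)
  have co: "\<forall>i. coeff q i \<in> L"
  proof
    fix i show "coeff q i \<in> L" using L D
      by (cases i; cases "i - 1"; simp add: q_def coeff_pCons sf_intros split: nat.splits)
  qed
  have "degree q \<ge> 1" by (simp add: q_def)
  then obtain v where v: "v \<in> L" "poly q v = 0" using scl co cop unfolding separably_closed_def by blast
  then have "v^2 = D" by (simp add: q_def power2_eq_square)
  then show ?thesis using v by blast
qed

definition quadext :: "'a::field set \<Rightarrow> 'a \<Rightarrow> 'a set" where
  "quadext K v = {k1 + k2 * v | k1 k2. k1 \<in> K \<and> k2 \<in> K}"

lemma quadext_mem: "w \<in> quadext K v \<longleftrightarrow> (\<exists>k1 k2. k1 \<in> K \<and> k2 \<in> K \<and> w = k1 + k2 * v)"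
  by (auto simp: quadext_def)

lemma quadext_subfield:
  assumes K: "subfield K" and v2: "v^2 \<in> K"
  shows "subfield (quadext K v)"
  unfolding subfield_def
proof (intro conjI ballI)
  show "0 \<in> quadext K v" unfolding quadext_mem using K
    by (intro exI[of _ 0]) (simp add: sf_0)
  show "1 \<in> quadext K v" unfolding quadext_mem using K
    by (intro exI[of _ 1] exI[of _ 0]) (simp add: sf_0 sf_1)
next
  fix x y assume "x \<in> quadext K v" "y \<in> quadext K v"
  then obtain k1 k2 m1 m2 where k: "k1 \<in> K" "k2 \<in> K" "x = k1 + k2 * v" and m: "m1 \<in> K" "m2 \<in> K" "y = m1 + m2 * v"
    unfolding quadext_mem by blast
  show "x + y \<in> quadext K v" unfolding quadext_mem using k m K
    by (intro exI[of _ "k1 + m1"] exI[of _ "k2 + m2"]) (simp add: sf_intros algebra_simps)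
  have "x * y = (k1 * m1 + k2 * m2 * v^2) + (k1 * m2 + k2 * m1) * v"
    using k m by (simp add: algebra_simps power2_eq_square)
  then show "x * y \<in> quadext K v" unfolding quadext_mem using k m K v2
    by (intro exI[of _ "k1 * m1 + k2 * m2 * v^2"] exI[of _ "k1 * m2 + k2 * m1"]) (simp add: sf_intros)
next
  fix x assume "x \<in> quadext K v"
  then obtain k1 k2 where k: "k1 \<in> K" "k2 \<in> K" "x = k1 + k2 * v" unfolding quadext_mem by blast
  show "- x \<in> quadext K v" unfolding quadext_mem using k K
    by (intro exI[of _ "- k1"] exI[of _ "- k2"]) (simp add: sf_intros)
  show "inverse x \<in> quadext K v"
  proof (cases "v \<in> K")
    case True
    then have "x \<in> K" using k K by (simp add: sf_intros)
    then show ?thesis unfolding quadext_mem using K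
      by (intro exI[of _ "inverse x"] exI[of _ 0]) (simp add: sf_intros)
  next
    case False
    show ?thesis
    proof (cases "x = 0")
      case True then show ?thesis unfolding quadext_mem using K
        by (intro exI[of _ 0]) (simp add: sf_0)
    next
      case x0: False
      define N where "N = k1^2 - k2^2 * v^2"
      have N0: "N \<noteq> 0"
      proof
        assume N: "N = 0"
        show False
        proof (cases "k2 = 0")
          case True then show False using N x0 k by (simp add: N_def)
        next
          case k20: False
          have "(v - k1 / k2) * (v + k1 / k2) = 0" using N k20
            by (simp add: N_def field_simps power2_eq_square)
          then have "v = k1 / k2 \<or> v = - (k1 / k2)" by (auto simp: eq_neg_iff_add_eq_0)
          then have "v \<in> K" using k K by (auto simp: sf_intros)
          then show False using False by simp
        qed
      qed
      have "x * (k1 - k2 * v) = N" using k by (simp add: N_def algebra_simps power2_eq_square)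
      then have "inverse x = k1 / N + (- k2 / N) * v" using N0 x0
        by (simp add: field_simps)
      then show ?thesis unfolding quadext_mem using k K v2 N0
        by (intro exI[of _ "k1 / N"] exI[of _ "- k2 / N"]) (simp add: sf_intros N_def)
    qed
  qed
qed

lemma quadext_base: "subfield K \<Longrightarrow> k \<in> K \<Longrightarrow> k \<in> quadext K v"
  unfolding quadext_mem by (intro exI[of _ k] exI[of _ 0]) (simp add: sf_0)

lemma quadext_gen: "subfield K \<Longrightarrow> v \<in> quadext K v"
  unfolding quadext_mem by (intro exI[of _ 0] exI[of _ 1]) (simp add: sf_0 sf_1)

lemma quadext_sub: "subfield K \<Longrightarrow> subfield L \<Longrightarrow> K \<subseteq> L \<Longrightarrow> v \<in> L \<Longrightarrow> quadext K v \<subseteq> L"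
  unfolding quadext_def by (auto intro: sf_intros)

lemma half_orbit:
  fixes e e' e'' x y :: "'a::field"
  assumes sc: "separable_closure K L" and char: "(2::'a) \<noteq> 0"
    and e: "e \<in> K" "e' \<in> K" "e'' \<in> K"
    and ns1: "\<not> nonzero_square K (e - e')" and ns2: "\<not> nonzero_square K (e - e'')"
    and d: "e \<noteq> e'" "e \<noteq> e''"
    and xy: "x \<in> L" "y \<in> L" "y \<noteq> 0"
    and c: "y^2 = (x - e)*(x - e')*(x - e'')"
    and h: "(x - e)^2 = (e - e')*(e - e'')"
  shows "\<exists>\<sigma>\<in>galois_group K L. \<sigma> x = x \<and> \<sigma> y = - y"
proof -
  have K: "subfield K" and L: "subfield L" and KL: "K \<subseteq> L" using sc by (auto simp: separable_closure_def)
  define v where "v = x - e"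
  define al where "al = e - e'"
  define be where "be = e - e''"
  have al0: "al \<noteq> 0" and be0: "be \<noteq> 0" using d by (auto simp: al_def be_def)
  have alK: "al \<in> K" "be \<in> K" using e K by (auto simp: al_def be_def sf_intros)
  have v2: "v^2 = al * be" using h by (simp add: v_def al_def be_def)
  have v2K: "v^2 \<in> K" using v2 alK K by (simp add: sf_intros)
  have vL: "v \<in> L" using xy e KL L by (auto simp: v_def sf_intros)
  define M where "M = quadext K v"
  have M: "subfield M" unfolding M_def using quadext_subfield[OF K v2K] .
  have KM: "K \<subseteq> M" unfolding M_def using quadext_base[OF K] by blast
  have MsL: "M \<subseteq> L" unfolding M_def using quadext_sub[OF K L KL vL] .
  have yy: "y^2 = v * (v + al) * (v + be)" using c by (simp add: v_def al_def be_def algebra_simps)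
  have key: "al * y^2 = (v * (v + al))^2"
  proof -
    have "al * y^2 = v * (v + al) * (al * v + al * be)" using yy by (simp add: algebra_simps)
    also have "\<dots> = v * (v + al) * (al * v + v^2)" using v2 by simp
    also have "\<dots> = (v * (v + al))^2" by (simp add: algebra_simps power2_eq_square)
    finally show ?thesis .
  qed
  have y2M: "y^2 \<in> M"
  proof -
    have "y^2 = (al + be) * (al * be) + (2 * (al * be)) * v"
    proof -
      have "y^2 = v * v^2 + (al + be) * v^2 + al * be * v" using yy by (simp add: algebra_simps power2_eq_square)
      then show ?thesis using v2 by (simp add: algebra_simps)
    qed
    moreover have "(al + be) * (al * be) \<in> K" "2 * (al * be) \<in> K" using alK K by (simp_all add: sf_intros)
    ultimately show ?thesis unfolding M_def quadext_mem by blast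
  qed
  have yM: "y \<notin> M"
  proof
    assume yM: "y \<in> M"
    define s where "s = v * (v + al) / y"
    have s2: "s^2 = al" using key xy(3) by (simp add: s_def field_simps power2_eq_square)
    have "s \<in> M" unfolding s_def using yM M quadext_gen[OF K] alK KM
      by (intro sf_divide sf_mult sf_add) (auto simp: M_def)
    then obtain m1 m2 where m: "m1 \<in> K" "m2 \<in> K" "s = m1 + m2 * v" unfolding M_def quadext_mem by blast
    have s2e: "al = (m1^2 + m2^2 * (al * be)) + 2 * m1 * m2 * v"
      using s2 m(3) v2 by (simp add: algebra_simps power2_eq_square)
    show False
    proof (cases "v \<in> K")
      case True
      then have "s \<in> K" using m K by (simp add: sf_intros)
      moreover have "s \<noteq> 0" using s2 al0 by auto
      ultimately show False using ns1 s2 by (auto simp: nonzero_square_def al_def)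
    next
      case vK: False
      have "m1 * m2 = 0"
      proof (rule ccontr)
        assume nz: "m1 * m2 \<noteq> 0"
        have "v = (al - (m1^2 + m2^2 * (al * be))) / (2 * m1 * m2)"
          using s2e nz char by (simp add: field_simps)
        then have "v \<in> K" using m alK K by (simp add: sf_intros)
        then show False using vK by simp
      qed
      then have "m1 = 0 \<or> m2 = 0" by simp
      then show False
      proof
        assume "m1 = 0"
        then have "al = m2^2 * (al * be)" using s2e by simp
        then have "1 = m2^2 * be" using al0 by (simp add: field_simps)
        then have m20: "m2 \<noteq> 0" by auto
        have "be = (1 / m2)^2" using \<open>1 = m2^2 * be\<close> m20 by (simp add: field_simps)
        moreover have "1 / m2 \<in> K" using m K by (simp add: sf_intros)
        moreover have "1 / m2 \<noteq> 0" using m20 by simp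
        ultimately show False using ns2 by (auto simp: nonzero_square_def be_def)
      next
        assume "m2 = 0"
        then have "al = m1^2" using s2e by simp
        moreover have "m1 \<noteq> 0" using \<open>al = m1^2\<close> al0 by auto
        ultimately show False using ns1 m by (auto simp: nonzero_square_def al_def)
      qed
    qed
  qed
  obtain \<sigma> where \<sigma>: "\<sigma> \<in> galois_group K L" "\<forall>a\<in>M. \<sigma> a = a" "\<sigma> y = - y"
    using galois_ext[OF sc M KM MsL xy(2) yM y2M] by blast
  have "x \<in> M"
  proof -
    have "x = e + 1 * v" by (simp add: v_def)
    then show ?thesis unfolding M_def quadext_mem using e K by (intro exI[of _ e] exI[of _ 1]) (simp add: sf_1)
  qed
  then show ?thesis using \<sigma> by blast
qed

lemma id_gal: "(\<lambda>x. x) \<in> galois_group K L"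
  unfolding galois_group_def by (simp add: bij_betw_id[unfolded id_def])

lemma x3_case:
  fixes e e' e'' x y lam :: "'a::field"
  assumes "y^2 = (x - e)*(x - e')*(x - e'')"
    and "lam * (2*y) = 3*x^2 - 2*(e+e'+e'')*x + (e*e'+e'*e''+e''*e)"
    and "lam^2 + (e+e'+e'') - 2*x = e"
  shows "(x - e)^2 = (e - e')*(e - e'')"
proof -
  have "4*y^2*((lam^2 + (e+e'+e'') - 2*x) - e) = ((x-e)^2 - (e-e')*(e-e''))^2"
    using x3_identity[OF assms(1,2)] .
  then have "((x-e)^2 - (e-e')*(e-e''))^2 = 0" using assms(3) by simp
  then show ?thesis by simp
qed

lemma four_torsion_orbit:
  fixes a b c :: "'a::field"
  assumes sc: "separable_closure K L" and char: "(2::'a) \<noteq> 0"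
    and abc: "a \<in> K" "b \<in> K" "c \<in> K" and dist: "a \<noteq> b" "b \<noteq> c" "a \<noteq> c"
    and ns: "\<not> nonzero_square K (a - b)" "\<not> nonzero_square K (b - a)"
       "\<not> nonzero_square K (b - c)" "\<not> nonzero_square K (c - b)"
       "\<not> nonzero_square K (c - a)" "\<not> nonzero_square K (a - c)"
    and P: "on_curve (cubic_curve a b c) L P"
    and PP: "point_double (cubic_curve a b c) (point_double (cubic_curve a b c) P) = Infinity"
  shows "\<exists>\<sigma>\<in>galois_group K L. point_map \<sigma> P = point_neg (cubic_curve a b c) P"
proof (cases P)
  case Infinity then show ?thesis using id_gal by (intro bexI[of _ "\<lambda>x. x"]) auto
next
  case (Affine x y)
  have K: "subfield K" and L: "subfield L" and KL: "K \<subseteq> L" using sc by (auto simp: separable_closure_def)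
  have xy: "x \<in> L" "y \<in> L" and c: "y^2 = (x-a)*(x-b)*(x-c)" using P by (auto simp: Affine on_curve_cubic)
  show ?thesis
  proof (cases "y = 0")
    case True then show ?thesis using id_gal
      by (intro bexI[of _ "\<lambda>x. x"]) (auto simp: Affine point_map_def neg_cubic)
  next
    case y0: False
    have d: "(2::'a) * y \<noteq> 0" using y0 char by simp
    define lam where "lam = (3*x^2 - 2*(a+b+c)*x + (a*b+b*c+c*a)) / (2*y)"
    define x3 where "x3 = lam^2 + (a+b+c) - 2*x"
    define y3 where "y3 = - lam*x3 - (y - lam*x)"
    have Q: "point_double (cubic_curve a b c) P = Affine x3 y3"
      using double_cubic[OF c d] by (simp add: Affine x3_def y3_def lam_def)
    have coL: "0 \<in> L" "- (a+b+c) \<in> L" "a*b+b*c+c*a \<in> L" "- (a*b*c) \<in> L"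
    proof -
      have abcL: "a \<in> L" "b \<in> L" "c \<in> L" using abc KL by auto
      show "0 \<in> L" "- (a+b+c) \<in> L" "a*b+b*c+c*a \<in> L" "- (a*b*c) \<in> L"
        using abcL L by (simp_all only: sf_intros)
    qed
    have "on_curve (cubic_curve a b c) L (point_double (cubic_curve a b c) P)"
      using on_curve_double[OF L P[unfolded cubic_curve_def]] coL unfolding cubic_curve_def by simp
    then have c3: "y3^2 = (x3-a)*(x3-b)*(x3-c)" using Q by (simp add: on_curve_cubic)
    have y30: "y3 = 0"
    proof (rule ccontr)
      assume "y3 \<noteq> 0"
      then have "(2::'a) * y3 \<noteq> 0" using char by simp
      from double_cubic[OF c3 this] have "point_double (cubic_curve a b c) (Affine x3 y3) \<noteq> Infinity" by simp
      then show False using PP Q by simp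
    qed
    then have "(x3-a)*(x3-b)*(x3-c) = 0" using c3 by simp
    then have x3abc: "x3 = a \<or> x3 = b \<or> x3 = c" by auto
    have l: "lam * (2*y) = 3*x^2 - 2*(a+b+c)*x + (a*b+b*c+c*a)" using d by (simp add: lam_def)
    have "\<exists>\<sigma>\<in>galois_group K L. \<sigma> x = x \<and> \<sigma> y = - y"
    proof -
      { assume "x3 = a"
        have "(x - a)^2 = (a - b)*(a - c)"
          using x3_case[of y x a b c lam] c l \<open>x3 = a\<close> by (simp add: x3_def)
        then have ?thesis using half_orbit[OF sc char abc(1,2,3) ns(1) ns(6) dist(1) dist(3) xy y0 c] by blast }
      moreover
      { assume "x3 = b"
        have c': "y^2 = (x - b)*(x - a)*(x - c)" using c by (simp add: algebra_simps)
        have l': "lam * (2*y) = 3*x^2 - 2*(b+a+c)*x + (b*a+a*c+c*b)" using l by (simp add: algebra_simps)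
        have "lam^2 + (b+a+c) - 2*x = b" using \<open>x3 = b\<close> by (simp add: x3_def algebra_simps)
        then have "(x - b)^2 = (b - a)*(b - c)" using x3_case[OF c' l'] by simp
        then have ?thesis using half_orbit[OF sc char abc(2,1,3) ns(2) ns(3) dist(1)[symmetric] dist(2) xy y0 c'] by blast }
      moreover
      { assume "x3 = c"
        have c': "y^2 = (x - c)*(x - a)*(x - b)" using c by (simp add: algebra_simps)
        have l': "lam * (2*y) = 3*x^2 - 2*(c+a+b)*x + (c*a+a*b+b*c)" using l by (simp add: algebra_simps)
        have "lam^2 + (c+a+b) - 2*x = c" using \<open>x3 = c\<close> by (simp add: x3_def algebra_simps)
        then have "(x - c)^2 = (c - a)*(c - b)" using x3_case[OF c' l'] by simp
        then have ?thesis using half_orbit[OF sc char abc(3,1,2) ns(5) ns(4) dist(3)[symmetric] dist(2)[symmetric] xy y0 c'] by blast }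
      ultimately show ?thesis using x3abc by blast
    qed
    then obtain \<sigma> where "\<sigma> \<in> galois_group K L" "\<sigma> x = x" "\<sigma> y = - y" by blast
    then show ?thesis by (intro bexI[of _ \<sigma>]) (simp_all add: Affine point_map_def neg_cubic)
  qed
qed

lemma gal_props:
  assumes "\<sigma> \<in> galois_group K L"
  shows "hom_on L \<sigma>" "\<forall>k\<in>K. \<sigma> k = k" "bij_betw \<sigma> L L"
  using assms by (auto simp: galois_group_def hom_on_def)

lemma legendre_point:
  fixes a b c t0 :: "'a::field"
  assumes sc: "separable_closure K L" and char: "(2::'a) \<noteq> 0"
    and abc: "a \<in> K" "b \<in> K" "c \<in> K" and t0: "t0 \<in> K" "t0 \<noteq> 0" "t0^2 = a - b"
    and dist: "a \<noteq> b" "b \<noteq> c" "a \<noteq> c"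
  shows "\<exists>P. on_curve (cubic_curve a b c) L P \<and>
     point_double (cubic_curve a b c) (point_double (cubic_curve a b c) P) = Infinity \<and>
     (\<forall>\<sigma>\<in>galois_group K L. point_map \<sigma> P \<noteq> point_neg (cubic_curve a b c) P)"
proof -
  have K: "subfield K" and L: "subfield L" and KL: "K \<subseteq> L" using sc by (auto simp: separable_closure_def)
  have abcL: "a \<in> L" "b \<in> L" "c \<in> L" "t0 \<in> L" using abc t0 KL by auto
  define al where "al = a - b"
  define be where "be = a - c"
  have al0: "al \<noteq> 0" "be \<noteq> 0" using dist by (auto simp: al_def be_def)
  have DL: "al * be \<in> L" using abcL L by (simp add: al_def be_def sf_intros)
  have D0: "al * be \<noteq> 0" using al0 by simp
  obtain v where v: "v \<in> L" "v^2 = al * be" using sqrt_exists[OF sc char DL D0] by blast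
  have v0: "v \<noteq> 0" using v D0 by auto
  have va0: "v + al \<noteq> 0"
  proof
    assume "v + al = 0"
    then have "v = - al" by (simp add: eq_neg_iff_add_eq_0)
    then have "al * al = al * be" using v(2) by (simp add: power2_eq_square)
    then have "al = be" using al0 by simp
    then show False using dist by (simp add: al_def be_def)
  qed
  define x where "x = a + v"
  define y where "y = v * (v + al) / t0"
  have yt: "y * t0 = v * (v + al)" using t0 by (simp add: y_def)
  have y0: "y \<noteq> 0" using v0 va0 t0 by (simp add: y_def)
  have t2: "t0^2 = al" using t0 by (simp add: al_def)
  have xL: "x \<in> L" "y \<in> L" using v abcL L by (simp_all add: x_def y_def al_def sf_intros)
  have c: "y^2 = (x-a)*(x-b)*(x-c)"
  proof -
    have "al * y^2 = al * ((x-a)*(x-b)*(x-c))"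
      using yt t2 v(2) unfolding x_def al_def be_def by algebra
    then show ?thesis using al0 by simp
  qed
  have d: "(2::'a) * y \<noteq> 0" using y0 char by simp
  define l0 where "l0 = (v + al) / t0"
  have lt: "l0 * t0 = v + al" using t0 by (simp add: l0_def)
  have lam: "(3*x^2 - 2*(a+b+c)*x + (a*b+b*c+c*a)) / (2*y) = l0"
  proof -
    have "al * (l0 * (2*y)) = al * (3*x^2 - 2*(a+b+c)*x + (a*b+b*c+c*a))"
      using lt yt t2 v(2) unfolding x_def al_def be_def by algebra
    then have "l0 * (2*y) = 3*x^2 - 2*(a+b+c)*x + (a*b+b*c+c*a)" using al0 by simp
    then show ?thesis using d by (simp add: field_simps)
  qed
  have x3: "l0^2 + (a+b+c) - 2*x = a"
  proof -
    have "al * (l0^2 + (a+b+c) - 2*x) = al * a"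
      using lt t2 v(2) unfolding x_def al_def be_def by algebra
    then show ?thesis using al0 by simp
  qed
  have y3: "- l0*(l0^2 + (a+b+c) - 2*x) - (y - l0*x) = 0"
  proof -
    have "t0 * (- l0*a - (y - l0*x)) = 0"
      using lt yt unfolding x_def by algebra
    then have "- l0*a - (y - l0*x) = 0" using t0 by simp
    then show ?thesis by (simp only: x3)
  qed
  have dbl: "point_double (cubic_curve a b c) (Affine x y) = Affine a 0"
  proof -
    have "point_double (cubic_curve a b c) (Affine x y) =
      Affine (l0^2 + (a+b+c) - 2*x) (- l0*(l0^2 + (a+b+c) - 2*x) - (y - l0*x))"
      using double_cubic[OF c d] by (simp only: lam)
    also have "\<dots> = Affine a 0" by (subst y3, subst x3, rule refl)
    finally show ?thesis .
  qed
  show ?thesis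
  proof (intro exI[of _ "Affine x y"] conjI ballI)
    show "on_curve (cubic_curve a b c) L (Affine x y)" using xL c by (simp add: on_curve_cubic)
    show "point_double (cubic_curve a b c) (point_double (cubic_curve a b c) (Affine x y)) = Infinity"
      by (simp add: dbl double_cubic_0)
  next
    fix \<sigma> assume \<sigma>: "\<sigma> \<in> galois_group K L"
    show "point_map \<sigma> (Affine x y) \<noteq> point_neg (cubic_curve a b c) (Affine x y)"
    proof
      assume "point_map \<sigma> (Affine x y) = point_neg (cubic_curve a b c) (Affine x y)"
      then have sx: "\<sigma> x = x" and sy: "\<sigma> y = - y" by (simp_all add: point_map_def neg_cubic)
      have h: "hom_on L \<sigma>" and fK: "\<forall>k\<in>K. \<sigma> k = k" using gal_props[OF \<sigma>] by auto
      have LR: "subring L" using L by (rule subfield_subring)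
      have e1: "y * t0 = (x - a) * (x - b)" using yt by (simp add: x_def al_def algebra_simps)
      have A: "\<sigma> (y * t0) = \<sigma> y * t0" using hom_mult[OF h xL(2) abcL(4)] fK t0 by simp
      have B: "\<sigma> ((x - a) * (x - b)) = (x - a) * (x - b)"
        using hom_mult[OF h, of "x - a" "x - b"] hom_diff[OF h LR] xL abcL L sx fK abc
        by (simp add: sf_intros)
      have "\<sigma> y * t0 = \<sigma> (y * t0)" using A by simp
      also have "\<dots> = \<sigma> ((x - a) * (x - b))" using e1 by simp
      also have "\<dots> = y * t0" using B e1 by simp
      finally have "\<sigma> y * t0 = y * t0" .
      then have "\<sigma> y = y" using t0 by simp
      then have "y = - y" using sy by simp
      then have "2 * y = 0" by simp
      then show False using d by simp
    qed
  qed
qed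

lemma degree_pderiv_le: "degree (pderiv p) \<le> degree p - 1"
  by (rule degree_le) (simp add: coeff_eq_0 coeff_pderiv)

lemma deg1_root:
  fixes c :: "'a::field poly"
  assumes "degree c = 1" shows "\<exists>r. poly c r = 0"
proof -
  have "c \<noteq> 0" using assms by auto
  then have c1: "coeff c 1 \<noteq> 0" using leading_coeff_neq_0[of c] assms by simp
  have "poly c r = coeff c 0 + coeff c 1 * r" for r using assms by (simp add: poly_altdef)
  then have "poly c (- coeff c 0 / coeff c 1) = 0" using c1 by simp
  then show ?thesis by blast
qed

lemma cubic_sep:
  fixes b2 b4 b6 :: "'a::field"
  assumes char: "(2::'a) \<noteq> 0" and disc: "discriminant (0, b2, 0, b4, b6) \<noteq> 0"
  shows "coprime [:b6, b4, b2, 1:] (pderiv [:b6, b4, b2, 1:])"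
proof (rule coprimeI)
  define f where "f = [:b6, b4, b2, 1:]"
  have pf: "pderiv f = [:b4, 2*b2, 3:]" by (simp add: f_def pderiv_pCons)
  have f0: "f \<noteq> 0" by (simp add: f_def)
  have df: "degree f = 3" by (simp add: f_def)
  have pfr: "poly (pderiv f) r = 3*r^2 + 2*b2*r + b4" for r by (simp add: pf algebra_simps power2_eq_square)
  have fr: "poly f r = r^3 + b2*r^2 + b4*r + b6" for r by (simp add: f_def algebra_simps power2_eq_square power3_eq_cube)
  have noroot: "\<not> (poly f r = 0 \<and> poly (pderiv f) r = 0)" for r
    using disc_double_root[of r b2 b4 b6] disc by (auto simp: fr pfr)
  fix c assume cf: "c dvd [:b6, b4, b2, 1:]" and cf': "c dvd pderiv [:b6, b4, b2, 1:]"
  then have cf: "c dvd f" and cf': "c dvd pderiv f" by (simp_all add: f_def)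
  show "is_unit c"
  proof (rule ccontr)
    assume nu: "\<not> is_unit c"
    have c0: "c \<noteq> 0" using cf f0 by auto
    have dc: "degree c \<ge> 1" using nu is_unit_iff_degree[OF c0] by simp
    have dcf: "degree c \<le> 3" using dvd_imp_degree_le[OF cf f0] df by simp
    obtain h where h: "f = c * h" using cf by (auto elim: dvdE)
    have h0: "h \<noteq> 0" using h f0 by auto
    have dh: "degree c + degree h = 3" using h c0 h0 df by (simp add: degree_mult_eq)
    have rootc: "poly c r = 0 \<Longrightarrow> False" for r
    proof -
      assume "poly c r = 0"
      then have "poly f r = 0" "poly (pderiv f) r = 0"
        using cf cf' by (auto elim!: dvdE)
      then show False using noroot by blast
    qed
    consider "degree c = 1" | "degree c = 2" | "degree c = 3" using dc dcf by linarith
    then show False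
    proof cases
      case 1 then show False using deg1_root rootc by blast
    next
      case 2
      then have "degree h = 1" using dh by simp
      then obtain r where r: "poly h r = 0" using deg1_root by blast
      have "pderiv f = c * pderiv h + h * pderiv c" using h by (simp add: pderiv_mult)
      then have "c dvd h * pderiv c" using cf' by (metis dvd_add_right_iff dvd_triv_left)
      then obtain k where k: "h * pderiv c = c * k" by (auto elim: dvdE)
      have pc0: "pderiv c \<noteq> 0"
      proof
        assume "pderiv c = 0"
        then have "coeff (pderiv c) 1 = 0" by simp
        then have "2 * coeff c 2 = 0" by (simp add: coeff_pderiv numeral_2_eq_2)
        moreover have "coeff c 2 \<noteq> 0" using 2 by (metis leading_coeff_0_iff c0)
        ultimately show False using char by simp
      qed
      have k0: "k \<noteq> 0" using k h0 pc0 by auto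
      have "degree (h * pderiv c) = 1 + degree (pderiv c)" using h0 pc0 \<open>degree h = 1\<close> by (simp add: degree_mult_eq)
      moreover have "degree (pderiv c) \<le> 1" using 2 degree_pderiv_le[of c] by simp
      moreover have "degree (c * k) = 2 + degree k" using c0 k0 2 by (simp add: degree_mult_eq)
      ultimately have "degree k = 0" using k by simp
      then have kc: "k = [:coeff k 0:]" by (metis degree_0_id)
      have "coeff k 0 \<noteq> 0" using k0 kc by (metis pCons_eq_0_iff)
      moreover have "poly c r * coeff k 0 = 0"
      proof -
        have "poly (c * k) r = 0" using k r by (metis poly_mult mult_zero_left)
        then show ?thesis by (subst (asm) kc) (simp add: mult.commute)
      qed
      ultimately show False using rootc by simp
    next
      case 3
      have "pderiv f = 0"
      proof (rule ccontr)
        assume "pderiv f \<noteq> 0"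
        then have "degree c \<le> degree (pderiv f)" using dvd_imp_degree_le[OF cf'] by simp
        moreover have "degree (pderiv f) \<le> 2" using degree_pderiv_le[of f] df by simp
        ultimately show False using 3 by simp
      qed
      then have z: "b4 = 0" "2 * b2 = 0" "(3::'a) = 0" by (simp_all add: pf)
      then have "b2 = 0" using char by simp
      have "discriminant (0, b2, 0, b4, b6) = - 432 * b6^2"
        using z \<open>b2 = 0\<close> by (simp add: discriminant_def Let_def power2_eq_square power3_eq_cube)
      moreover have "(432::'a) = 144 * 3" by simp
      ultimately have "discriminant (0, b2, 0, b4, b6) = 0" using z by simp
      then show False using disc by simp
    qed
  qed
qed

lemma cubic_perm1: "cubic_curve a b c = cubic_curve b a c"
  by (simp add: cubic_curve_def algebra_simps)
lemma cubic_perm2: "cubic_curve a b c = cubic_curve a c b"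
  by (simp add: cubic_curve_def algebra_simps)

lemma iso_comp:
  assumes "iso_par E1 E2 u r s t" "iso_par E2 E3 u' r' s' t'"
  shows "iso_par E1 E3 (u*u') (r + u^2*r') (s + u*s') (t + u^3*t' + s*u^2*r')"
proof -
  obtain a1 a2 a3 a4 a6 where E1: "E1 = (a1,a2,a3,a4,a6)" by (cases E1) auto
  obtain b1 b2 b3 b4 b6 where E2: "E2 = (b1,b2,b3,b4,b6)" by (cases E2) auto
  obtain c1 c2 c3 c4 c6 where E3: "E3 = (c1,c2,c3,c4,c6)" by (cases E3) auto
  from assms have h1: "u \<noteq> 0" "u * b1 = a1 + 2*s" "u^2 * b2 = a2 - s*a1 + 3*r - s^2"
    "u^3 * b3 = a3 + r*a1 + 2*t" "u^4 * b4 = a4 - s*a3 + 2*r*a2 - (t + r*s)*a1 + 3*r^2 - 2*s*t"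
    "u^6 * b6 = a6 + r*a4 + r^2*a2 + r^3 - t*a3 - t^2 - r*t*a1"
    and h2: "u' \<noteq> 0" "u' * c1 = b1 + 2*s'" "u'^2 * c2 = b2 - s'*b1 + 3*r' - s'^2"
    "u'^3 * c3 = b3 + r'*b1 + 2*t'" "u'^4 * c4 = b4 - s'*b3 + 2*r'*b2 - (t' + r'*s')*b1 + 3*r'^2 - 2*s'*t'"
    "u'^6 * c6 = b6 + r'*b4 + r'^2*b2 + r'^3 - t'*b3 - t'^2 - r'*t'*b1"
    by (auto simp: iso_par_def E1 E2 E3)
  show ?thesis unfolding iso_par_def E1 E3 prod.case
  proof (intro conjI)
    show "u * u' \<noteq> 0" using h1 h2 by simp
    show "u * u' * c1 = a1 + 2 * (s + u * s')" using h1 h2 by algebra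
    show "(u * u')\<^sup>2 * c2 = a2 - (s + u * s') * a1 + 3 * (r + u\<^sup>2 * r') - (s + u * s')\<^sup>2" using h1 h2 by algebra
    show "(u * u') ^ 3 * c3 = a3 + (r + u\<^sup>2 * r') * a1 + 2 * (t + u ^ 3 * t' + s * u\<^sup>2 * r')" using h1 h2 by algebra
    show "(u * u') ^ 4 * c4 = a4 - (s + u * s') * a3 + 2 * (r + u\<^sup>2 * r') * a2 -
      (t + u ^ 3 * t' + s * u\<^sup>2 * r' + (r + u\<^sup>2 * r') * (s + u * s')) * a1 + 3 * (r + u\<^sup>2 * r')\<^sup>2 -
      2 * (s + u * s') * (t + u ^ 3 * t' + s * u\<^sup>2 * r')" using h1 h2 by algebra
    show "(u * u') ^ 6 * c6 = a6 + (r + u\<^sup>2 * r') * a4 + (r + u\<^sup>2 * r')\<^sup>2 * a2 + (r + u\<^sup>2 * r') ^ 3 -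
      (t + u ^ 3 * t' + s * u\<^sup>2 * r') * a3 - (t + u ^ 3 * t' + s * u\<^sup>2 * r')\<^sup>2 -
      (r + u\<^sup>2 * r') * (t + u ^ 3 * t' + s * u\<^sup>2 * r') * a1" using h1 h2 by algebra
  qed
qed

lemma iso_dist:
  assumes ell: "elliptic_curve K E" and ip: "iso_par E (cubic_curve a b c) u r s t"
  shows "a \<noteq> b" "b \<noteq> c" "a \<noteq> c"
proof -
  obtain a1 a2 a3 a4 a6 where E: "E = (a1,a2,a3,a4,a6)" by (cases E) auto
  have "discriminant E = u^12 * discriminant (cubic_curve a b c)"
    using disc_identity[OF ip[unfolded E cubic_curve_def]] by (simp add: E cubic_curve_def)
  then have "discriminant (cubic_curve a b c) \<noteq> 0" using ell by (auto simp: elliptic_curve_def)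
  then have "(a - b) * (b - c) * (c - a) \<noteq> 0" by (simp add: disc_cubic)
  then show "a \<noteq> b" "b \<noteq> c" "a \<noteq> c" by auto
qed

definition cond2 :: "'a::field set \<Rightarrow> 'a weierstrass \<Rightarrow> bool" where
  "cond2 K E \<longleftrightarrow> (\<exists>a\<in>K. \<exists>b\<in>K. \<exists>c\<in>K. iso_over K E (cubic_curve a b c) \<and>
              (nonzero_square K (a - b) \<or> nonzero_square K (b - a) \<or>
               nonzero_square K (b - c) \<or> nonzero_square K (c - b) \<or>
               nonzero_square K (c - a) \<or> nonzero_square K (a - c)))"

lemma six_cases:
  assumes H: "\<And>a b c. a \<in> K \<Longrightarrow> b \<in> K \<Longrightarrow> c \<in> K \<Longrightarrow> iso_over K E (cubic_curve a b c) \<Longrightarrow>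
      nonzero_square K (a - b) \<Longrightarrow> G"
    and C: "cond2 K E"
  shows G
proof -
  obtain a b c where abc: "a \<in> K" "b \<in> K" "c \<in> K" and iso: "iso_over K E (cubic_curve a b c)"
    and sq: "nonzero_square K (a - b) \<or> nonzero_square K (b - a) \<or>
               nonzero_square K (b - c) \<or> nonzero_square K (c - b) \<or>
               nonzero_square K (c - a) \<or> nonzero_square K (a - c)"
    using C unfolding cond2_def by blast
  have p1: "cubic_curve a b c = cubic_curve b a c" by (rule cubic_perm1)
  have p2: "cubic_curve a b c = cubic_curve b c a" by (simp add: cubic_curve_def algebra_simps)
  have p3: "cubic_curve a b c = cubic_curve c b a" by (simp add: cubic_curve_def algebra_simps)
  have p4: "cubic_curve a b c = cubic_curve c a b" by (simp add: cubic_curve_def algebra_simps)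
  have p5: "cubic_curve a b c = cubic_curve a c b" by (rule cubic_perm2)
  from sq show G
  proof (elim disjE)
    assume "nonzero_square K (a - b)" then show G using H abc iso by blast
  next
    assume "nonzero_square K (b - a)" then show G using H[of b a c] abc iso p1 by simp
  next
    assume "nonzero_square K (b - c)" then show G using H[of b c a] abc iso p2 by simp
  next
    assume "nonzero_square K (c - b)" then show G using H[of c b a] abc iso p3 by simp
  next
    assume "nonzero_square K (c - a)" then show G using H[of c a b] abc iso p4 by simp
  next
    assume "nonzero_square K (a - c)" then show G using H[of a c b] abc iso p5 by simp
  qed
qed

lemma leg_of_sq:
  assumes K: "subfield K" and ell: "elliptic_curve K E" and abc: "a \<in> K" "b \<in> K" "c \<in> K"
    and iso: "iso_over K E (cubic_curve a b c)" and sq: "nonzero_square K (a - b)"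
  shows "is_legendre K E"
proof -
  obtain u r s t where urst: "u \<in> K" "r \<in> K" "s \<in> K" "t \<in> K" and ip: "iso_par E (cubic_curve a b c) u r s t"
    using iso unfolding iso_over_iff by blast
  have d: "a \<noteq> b" "b \<noteq> c" "a \<noteq> c" using iso_dist[OF ell ip] by auto
  obtain t0 where t0: "t0 \<in> K" "t0 \<noteq> 0" "t0^2 = a - b" using sq by (auto simp: nonzero_square_def)
  define l where "l = (c - b) / (a - b)"
  have ab: "a - b \<noteq> 0" using d by simp
  have t4: "t0^4 = (a - b)^2"
  proof -
    have "t0^4 = (t0^2)^2" by (simp add: power_mult[symmetric])
    then show ?thesis using t0(3) by simp
  qed
  have ip2: "iso_par (cubic_curve a b c) (legendre_curve l) t0 b 0 0"
    unfolding iso_par_def cubic_curve_def legendre_curve_def prod.case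
  proof (intro conjI)
    show "t0 \<noteq> 0" by (rule t0(2))
    show "t0 * 0 = 0 + 2 * 0" by simp
    show "t0\<^sup>2 * - (1 + l) = - (a + b + c) - 0 * 0 + 3 * b - 0\<^sup>2"
      using ab unfolding t0(3) l_def by (simp add: field_simps)
    show "t0 ^ 3 * 0 = 0 + b * 0 + 2 * 0" by simp
    show "t0 ^ 4 * l = a * b + b * c + c * a - 0 * 0 + 2 * b * - (a + b + c) - (0 + b * 0) * 0 + 3 * b\<^sup>2 - 2 * 0 * 0"
      using ab unfolding t4 l_def by (simp add: field_simps power2_eq_square)
    show "t0 ^ 6 * 0 = - (a * b * c) + b * (a * b + b * c + c * a) + b\<^sup>2 * - (a + b + c) + b ^ 3 - 0 * 0 - 0\<^sup>2 - b * 0 * 0"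
      by (simp add: algebra_simps power2_eq_square power3_eq_cube)
  qed
  have ipc: "iso_par E (legendre_curve l) (u*t0) (r + u^2*b) (s + u*0) (t + u^3*0 + s*u^2*b)"
    by (rule iso_comp[OF ip ip2])
  have "iso_over K E (legendre_curve l)" unfolding iso_over_iff
    using ipc urst t0 abc K by (intro bexI[of _ "u*t0"] bexI[of _ "r + u^2*b"] bexI[of _ "s + u*0"]
        bexI[of _ "t + u^3*0 + s*u^2*b"]) (auto simp: sf_intros)
  moreover have "l \<in> K" using abc K by (simp add: l_def sf_intros)
  moreover have "l \<noteq> 0" using d ab by (simp add: l_def)
  moreover have "l \<noteq> 1" using d ab by (simp add: l_def)
  ultimately show ?thesis unfolding is_legendre_def by blast
qed

lemma legendre_to_cond2:
  assumes K: "subfield K" and "is_legendre K E" shows "cond2 K E"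
proof -
  obtain l where l: "l \<in> K" "iso_over K E (legendre_curve l)" using assms by (auto simp: is_legendre_def)
  have "legendre_curve l = cubic_curve 0 1 l" by (simp add: legendre_curve_def cubic_curve_def)
  moreover have "nonzero_square K (1 - 0)" using K by (auto simp: nonzero_square_def intro!: bexI[of _ 1] sf_1)
  ultimately show ?thesis unfolding cond2_def using l K by (intro bexI[of _ 0] bexI[of _ 1] bexI[of _ l]) (auto simp: sf_0 sf_1)
qed

definition cond3 :: "'a::field set \<Rightarrow> 'a set \<Rightarrow> 'a weierstrass \<Rightarrow> bool" where
  "cond3 K L E \<longleftrightarrow> ((\<forall>P. on_curve E L P \<and> point_double E P = Infinity \<longrightarrow> on_curve E K P) \<and>
           (\<exists>P. on_curve E L P \<and> point_double E (point_double E P) = Infinity \<and>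
                (\<forall>\<sigma>\<in>galois_group K L. point_map \<sigma> P \<noteq> point_neg E P)))"

lemma cubic_coeffs_in:
  assumes "subfield S" "a \<in> S" "b \<in> S" "c \<in> S"
  shows "cubic_curve a b c = (0, - (a+b+c), 0, a*b+b*c+c*a, - (a*b*c))"
    "0 \<in> S" "- (a+b+c) \<in> S" "a*b+b*c+c*a \<in> S" "- (a*b*c) \<in> S"
  using assms by (simp_all only: cubic_curve_def sf_intros)

lemma double_double_chg:
  assumes ip: "iso_par E (cubic_curve a b c) u r s t" and L: "subfield L"
    and abc: "a \<in> L" "b \<in> L" "c \<in> L" and P: "on_curve (cubic_curve a b c) L P"
  shows "point_double E (point_double E (chg u r s t P)) =
         chg u r s t (point_double (cubic_curve a b c) (point_double (cubic_curve a b c) P))"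
proof -
  note cc = cubic_coeffs_in[OF L abc]
  have Q: "on_curve (cubic_curve a b c) L (point_double (cubic_curve a b c) P)"
    using on_curve_double[OF L P[unfolded cc(1)] cc(2,3,2,4,5)] cc(1) by simp
  show ?thesis using double_chg_gen[OF ip P] double_chg_gen[OF ip Q] by simp
qed

lemma sq_to_3:
  fixes a b c :: "'a::field"
  assumes sc: "separable_closure K L" and char: "(2::'a) \<noteq> 0" and ell: "elliptic_curve K E"
    and abc: "a \<in> K" "b \<in> K" "c \<in> K" and iso: "iso_over K E (cubic_curve a b c)"
    and sq: "nonzero_square K (a - b)"
  shows "cond3 K L E"
proof -
  have K: "subfield K" and L: "subfield L" and KL: "K \<subseteq> L" using sc by (auto simp: separable_closure_def)
  obtain u r s t where urst: "u \<in> K" "r \<in> K" "s \<in> K" "t \<in> K" and ip: "iso_par E (cubic_curve a b c) u r s t"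
    using iso unfolding iso_over_iff by blast
  have urstL: "u \<in> L" "r \<in> L" "s \<in> L" "t \<in> L" using urst KL by auto
  have abcL: "a \<in> L" "b \<in> L" "c \<in> L" using abc KL by auto
  have u0: "u \<noteq> 0" using ip by (cases E) (simp add: iso_par_def cubic_curve_def)
  have d: "a \<noteq> b" "b \<noteq> c" "a \<noteq> c" using iso_dist[OF ell ip] by auto
  have A: "\<forall>P. on_curve E L P \<and> point_double E P = Infinity \<longrightarrow> on_curve E K P"
  proof (intro allI impI)
    fix P assume P: "on_curve E L P \<and> point_double E P = Infinity"
    obtain P' where P': "on_curve (cubic_curve a b c) L P'" "P = chg u r s t P'"
      using on_curve_chg_inv[OF ip L urstL] P by blast
    have "chg u r s t (point_double (cubic_curve a b c) P') = Infinity"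
      using double_chg_gen[OF ip P'(1)] P P'(2) by simp
    then have dP: "point_double (cubic_curve a b c) P' = Infinity" by simp
    have "on_curve (cubic_curve a b c) K P'"
    proof (cases P')
      case Infinity then show ?thesis by (simp add: on_curve_def)
    next
      case (Affine x y)
      have c: "y^2 = (x-a)*(x-b)*(x-c)" using P'(1) by (simp add: Affine on_curve_cubic)
      have y0: "y = 0"
      proof (rule ccontr)
        assume "y \<noteq> 0" then have "(2::'a) * y \<noteq> 0" using char by simp
        from double_cubic[OF c this] show False using dP Affine by simp
      qed
      then have "(x-a)*(x-b)*(x-c) = 0" using c by simp
      then have z: "(x-a)*(x-b)*(x-c) = 0" .
      then have "x \<in> K" using abc by auto
      then show ?thesis using y0 K z by (simp add: Affine on_curve_cubic sf_0)
    qed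
    then show "on_curve E K P" using on_curve_chg[OF ip K urst] P'(2) by simp
  qed
  obtain t0 where t0: "t0 \<in> K" "t0 \<noteq> 0" "t0^2 = a - b" using sq by (auto simp: nonzero_square_def)
  obtain P' where P': "on_curve (cubic_curve a b c) L P'"
    "point_double (cubic_curve a b c) (point_double (cubic_curve a b c) P') = Infinity"
    "\<forall>\<sigma>\<in>galois_group K L. point_map \<sigma> P' \<noteq> point_neg (cubic_curve a b c) P'"
    using legendre_point[OF sc char abc t0 d] by blast
  define P where "P = chg u r s t P'"
  have B1: "on_curve E L P" unfolding P_def using on_curve_chg[OF ip L urstL P'(1)] .
  have B2: "point_double E (point_double E P) = Infinity"
    unfolding P_def using double_double_chg[OF ip L abcL P'(1)] P'(2) by simp
  have B3: "\<forall>\<sigma>\<in>galois_group K L. point_map \<sigma> P \<noteq> point_neg E P"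
  proof (intro ballI notI)
    fix \<sigma> assume \<sigma>: "\<sigma> \<in> galois_group K L" and eq: "point_map \<sigma> P = point_neg E P"
    have h: "hom_on L \<sigma>" and fK: "\<forall>k\<in>K. \<sigma> k = k" using gal_props[OF \<sigma>] by auto
    have "point_map \<sigma> P = chg u r s t (point_map \<sigma> P')"
      unfolding P_def using map_chg[OF h L urstL _ _ _ _ P'(1)] fK urst by simp
    moreover have "point_neg E P = chg u r s t (point_neg (cubic_curve a b c) P')"
      unfolding P_def by (rule neg_chg[OF ip])
    ultimately have "point_map \<sigma> P' = point_neg (cubic_curve a b c) P'" using eq chg_inj[OF u0] by metis
    then show False using P'(3) \<sigma> by blast
  qed
  show ?thesis unfolding cond3_def using A B1 B2 B3 by blast
qed

lemma three_to_2:
  fixes E :: "'a::field weierstrass"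
  assumes sc: "separable_closure K L" and char: "(2::'a) \<noteq> 0" and ell: "elliptic_curve K E"
    and C3: "cond3 K L E"
  shows "cond2 K E"
proof -
  have K: "subfield K" and L: "subfield L" and KL: "K \<subseteq> L" and scl: "separably_closed L"
    using sc by (auto simp: separable_closure_def)
  obtain a1 a2 a3 a4 a6 where E: "E = (a1,a2,a3,a4,a6)" by (cases E) auto
  have aK: "a1 \<in> K" "a2 \<in> K" "a3 \<in> K" "a4 \<in> K" "a6 \<in> K" and disc: "discriminant E \<noteq> 0"
    using ell by (auto simp: elliptic_curve_def E)
  define s0 where "s0 = - a1 / 2"
  define t0 where "t0 = - a3 / 2"
  define b2 where "b2 = a2 - s0*a1 - s0^2"
  define b4 where "b4 = a4 - s0*a3 - t0*a1 - 2*s0*t0"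
  define b6 where "b6 = a6 - t0*a3 - t0^2"
  have stK: "s0 \<in> K" "t0 \<in> K" using aK K by (simp_all add: s0_def t0_def sf_intros)
  have bK: "b2 \<in> K" "b4 \<in> K" "b6 \<in> K" using aK stK K by (simp_all add: b2_def b4_def b6_def sf_intros)
  have ip0: "iso_par E (0, b2, 0, b4, b6) 1 0 s0 t0"
    unfolding iso_par_def E prod.case using char
    by (simp add: s0_def t0_def b2_def b4_def b6_def field_simps)
  have disc'': "discriminant (0, b2, 0, b4, b6) \<noteq> 0"
    using disc_identity[OF ip0[unfolded E]] disc by (simp add: E)
  have cop: "coprime [:b6, b4, b2, 1:] (pderiv [:b6, b4, b2, 1:])" by (rule cubic_sep[OF char disc''])
  have bL: "b2 \<in> L" "b4 \<in> L" "b6 \<in> L" using bK KL by auto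
  have coL: "\<forall>i. coeff [:b6, b4, b2, 1:] i \<in> L"
  proof
    fix i show "coeff [:b6, b4, b2, 1:] i \<in> L"
      using bL L by (cases i; cases "i - 1"; cases "i - 2"; simp add: coeff_pCons sf_0 sf_1 split: nat.splits)
  qed
  obtain a where aL: "a \<in> L" and fa0: "poly [:b6, b4, b2, 1:] a = 0"
    using scl coL cop unfolding separably_closed_def by fastforce
  have fa: "b6 = - (a^3 + b2*a^2 + b4*a)"
  proof -
    have "b6 + b4*a + b2*a^2 + a^3 = 0" using fa0 by (simp add: algebra_simps power2_eq_square power3_eq_cube)
    then show ?thesis by algebra
  qed
  define g where "g = [:b4 + a*b2 + a^2, b2 + a, 1:]"
  have fg: "[:b6, b4, b2, 1:] = [:- a, 1:] * g"
    by (simp add: g_def fa algebra_simps power2_eq_square power3_eq_cube)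
  have copg: "coprime g (pderiv g)" using sep_dvd[OF _ cop] fg by (metis dvd_triv_right)
  have coLg: "\<forall>i. coeff g i \<in> L"
  proof
    fix i show "coeff g i \<in> L"
      using bL aL L by (cases i; cases "i - 1"; simp add: g_def coeff_pCons sf_intros split: nat.splits)
  qed
  obtain b where bL': "b \<in> L" and gb0: "poly g b = 0"
    using scl coLg copg unfolding separably_closed_def by (fastforce simp: g_def)
  have gb: "b^2 + (b2 + a)*b + (b4 + a*b2 + a^2) = 0" using gb0 by (simp add: g_def algebra_simps power2_eq_square)
  define c where "c = - (b2 + a) - b"
  have cL: "c \<in> L" using aL bL' bL L by (simp add: c_def sf_intros)
  have E'': "(0, b2, 0, b4, b6) = cubic_curve a b c"
  proof -
    have "b2 = - (a + b + c)" by (simp add: c_def)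
    moreover have "b4 = a*b + b*c + c*a" using gb unfolding c_def by algebra
    moreover have "b6 = - (a*b*c)" using gb fa unfolding c_def by algebra
    ultimately show ?thesis by (simp add: cubic_curve_def)
  qed
  have ip: "iso_par E (cubic_curve a b c) 1 0 s0 t0" using ip0 E'' by simp
  have stL: "(1::'a) \<in> L" "(0::'a) \<in> L" "s0 \<in> L" "t0 \<in> L" using stK KL L by (auto simp: sf_0 sf_1)
  have tors: "e \<in> K" if e: "e \<in> L" "(e-a)*(e-b)*(e-c) = 0" for e
  proof -
    have oc: "on_curve (cubic_curve a b c) L (Affine e 0)" using e L by (simp add: on_curve_cubic sf_0)
    have "on_curve E L (chg 1 0 s0 t0 (Affine e 0))" using on_curve_chg[OF ip L stL oc] .
    moreover have "point_double E (chg 1 0 s0 t0 (Affine e 0)) = Infinity"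
      using double_chg_gen[OF ip oc] by (simp add: double_cubic_0)
    ultimately have "on_curve E K (chg 1 0 s0 t0 (Affine e 0))" using C3 unfolding cond3_def by blast
    then show "e \<in> K" by (simp add: chg_def on_curve_def)
  qed
  have abcK: "a \<in> K" "b \<in> K" "c \<in> K" using tors aL bL' cL by auto
  have iso: "iso_over K E (cubic_curve a b c)" unfolding iso_over_iff
    using ip stK K by (intro bexI[of _ 1] bexI[of _ 0] bexI[of _ s0] bexI[of _ t0]) (auto simp: sf_0 sf_1)
  have d: "a \<noteq> b" "b \<noteq> c" "a \<noteq> c" using iso_dist[OF ell ip] by auto
  have sq: "nonzero_square K (a - b) \<or> nonzero_square K (b - a) \<or>
               nonzero_square K (b - c) \<or> nonzero_square K (c - b) \<or>
               nonzero_square K (c - a) \<or> nonzero_square K (a - c)"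
  proof (rule ccontr)
    assume ns: "\<not> ?thesis"
    obtain P where P: "on_curve E L P" "point_double E (point_double E P) = Infinity"
      "\<forall>\<sigma>\<in>galois_group K L. point_map \<sigma> P \<noteq> point_neg E P"
      using C3 unfolding cond3_def by blast
    obtain P' where P': "on_curve (cubic_curve a b c) L P'" "P = chg 1 0 s0 t0 P'"
      using on_curve_chg_inv[OF ip L stL P(1)] by blast
    have "chg 1 0 s0 t0 (point_double (cubic_curve a b c) (point_double (cubic_curve a b c) P')) = Infinity"
      using double_double_chg[OF ip L aL bL' cL P'(1)] P(2) P'(2) by simp
    then have dd: "point_double (cubic_curve a b c) (point_double (cubic_curve a b c) P') = Infinity" by simp
    obtain \<sigma> where \<sigma>: "\<sigma> \<in> galois_group K L" "point_map \<sigma> P' = point_neg (cubic_curve a b c) P'"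
      using four_torsion_orbit[OF sc char abcK d _ _ _ _ _ _ P'(1) dd] ns by blast
    have h: "hom_on L \<sigma>" and fK: "\<forall>k\<in>K. \<sigma> k = k" using gal_props[OF \<sigma>(1)] by auto
    have "point_map \<sigma> P = chg 1 0 s0 t0 (point_map \<sigma> P')"
      unfolding P'(2) using map_chg[OF h L stL _ _ _ _ P'(1)] fK stK K by (simp add: sf_0 sf_1)
    also have "\<dots> = point_neg E P" unfolding P'(2) using \<sigma>(2) neg_chg[OF ip] by simp
    finally show False using P(3) \<sigma>(1) by blast
  qed
  show ?thesis unfolding cond2_def using abcK iso sq by blast
qed

theorem mainTheorem4:
  fixes K L :: "'a::field set" and E :: "'a weierstrass"
  assumes char: "(2::'a) \<noteq> 0"
    and sepcl: "separable_closure K L"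
    and ell: "elliptic_curve K E"
  shows "(is_legendre K E \<longleftrightarrow>
           (\<exists>a\<in>K. \<exists>b\<in>K. \<exists>c\<in>K. iso_over K E (cubic_curve a b c) \<and>
              (nonzero_square K (a - b) \<or> nonzero_square K (b - a) \<or>
               nonzero_square K (b - c) \<or> nonzero_square K (c - b) \<or>
               nonzero_square K (c - a) \<or> nonzero_square K (a - c))))
       \<and> ((\<exists>a\<in>K. \<exists>b\<in>K. \<exists>c\<in>K. iso_over K E (cubic_curve a b c) \<and>
              (nonzero_square K (a - b) \<or> nonzero_square K (b - a) \<or>
               nonzero_square K (b - c) \<or> nonzero_square K (c - b) \<or>
               nonzero_square K (c - a) \<or> nonzero_square K (a - c)))
          \<longleftrightarrow>
          ((\<forall>P. on_curve E L P \<and> point_double E P = Infinity \<longrightarrow> on_curve E K P) \<and>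
           (\<exists>P. on_curve E L P \<and> point_double E (point_double E P) = Infinity \<and>
                (\<forall>\<sigma>\<in>galois_group K L. point_map \<sigma> P \<noteq> point_neg E P))))"
proof -
  have K: "subfield K" using sepcl by (auto simp: separable_closure_def)
  have A: "is_legendre K E \<longleftrightarrow> cond2 K E"
  proof
    assume "is_legendre K E" then show "cond2 K E" by (rule legendre_to_cond2[OF K])
  next
    assume "cond2 K E" then show "is_legendre K E"
      using six_cases[where G = "is_legendre K E"] leg_of_sq[OF K ell] by blast
  qed
  have B: "cond2 K E \<longleftrightarrow> cond3 K L E"
  proof
    assume "cond2 K E" then show "cond3 K L E"
      using six_cases[where G = "cond3 K L E"] sq_to_3[OF sepcl char ell] by blast
  next
    assume "cond3 K L E" then show "cond2 K E" by (rule three_to_2[OF sepcl char ell])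
  qed
  show ?thesis using A B unfolding cond2_def cond3_def by blast
qed

end
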